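(* Let $f_1 \in \mathcal{F}_{\mu_1,L_1}(\mathbb{R}^d)$ and $f_2 \in \mathcal{F}_{\mu_2,L_2}(\mathbb{R}^d)$ with $\mu_1 \in [0,\infty)$, $L_1 \in (\mu_1,\infty]$, $\mu_2 \in \mathbb{R}$, $L_2 \in (\mu_2,\infty]$, such that $F = f_1 - f_2$ is bounded below with $F_{lo} := \inf F$, $\emptyset \ne \operatorname{dom}\partial f_1 \subseteq \operatorname{dom}\partial f_2$ and $\operatorname{range}\partial f_2 \subseteq \operatorname{range}\partial f_1$. Assume $L_1 < \infty$ or $L_2 < \infty$, and $\mu_1+\mu_2>0$ or $\mu_1=\mu_2=0$. Run $N \ge 1$ DCA iterations from $x^0 \in \operatorname{dom}\partial f_1$: for $k = 0,\dots,N-1$ select $g_2^k \in \partial f_2(x^k)$ and $x^{k+1} \in \operatorname{argmin}_w \{f_1(w) - \langle g_2^k, w\rangle\}$, and set $g_1^{k+1} := g_2^k \in \partial f_1(x^{k+1})$; let $g_1^0 \in \partial f_1(x^0)$ and $g_2^N \in \partial f_2(x^N)$ be arbitrary. Suppose the parameters lie in the domain $D_i$ of one of the six regimes below and let $p_i := \sigma_i + \sigma_i^+$. Then $$\tfrac12 \min_{0\le k\le N} \|g_1^k - g_2^k\|^2 \le \frac{F(x^0) - F(x^N)}{p_i N}.$$ If in addition $L_1 > \mu_2$, then $$\tfrac12 \min_{0\le k\le N} \|g_1^k - g_2^k\|^2 \le \frac{F(x^0) - F_{lo}}{p_i N + \frac{1}{L_1 - \mu_2}}.$$ Regimes (with $B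 := \mu_1^{-1}+\mu_2^{-1}+L_2^{-1}$, $E := \frac{L_2+\mu_2}{L_1L_2}\cdot\frac{L_2-L_1}{-\mu_2} + \mu_1^{-1} - L_1^{-1}$): (1) $\sigma_1 = L_2^{-1}\frac{L_2-\mu_1}{L_1-\mu_1}$, $\sigma_1^+ = L_2^{-1}\big(1 + \frac{L_2^{-1}-L_1^{-1}}{\mu_1^{-1}-L_1^{-1}}\big)$; $D_1$: $L_1\ge L_2\ge\mu_1\ge0$, $L_1>\mu_2$, and $\mu_2 \ge 0$ or ($\mu_2<0$ and $E\le0$). (2) $\sigma_2 = L_1^{-1}\big(1+\frac{L_1^{-1}-L_2^{-1}}{\mu_2^{-1}-L_2^{-1}}\big)$, $\sigma_2^+ = L_1^{-1}\frac{L_1-\mu_2}{L_2-\mu_2}$; $D_2$: $L_2\ge L_1\ge\mu_2\ge0$, $L_2>\mu_1$, $\mu_1\ge0$. (3) $\sigma_3 = \frac{L_1^{-1}B}{B-L_1^{-1}}$, $\sigma_3^+ = \frac{1}{L_2+\mu_2}$; $D_3$: $\mu_2<0$, $\mu_1>0$, $L_2>\mu_1$, $L_1>\mu_2$, $B\le0$, and ($L_1\ge L_2$ and $E\ge0$) or $L_2>L_1$. (4) $\sigma_4=0$, $\sigma_4^+ = \frac{\mu_1+\mu_2}{\mu_2^2}$; $D_4$: $\mu_2<0$, $\mu_1>0$, $L_1>\mu_2$, and ($B>0$, $L_2>\mu_1$) or ($B>0$, $0<L_2\le\mu_1$) or ($B\le0$, $L_2\le0$). (5) $\sigma_5=0$,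 $\sigma_5^+ = \frac{L_2+\mu_1}{L_2^2}$; $D_5$: $L_1>\mu_1\ge L_2>0$, $L_1>\mu_2$, and $\mu_2\ge0$ or ($\mu_2<0$ and $B\le0$). (6) $\sigma_6 = \frac{L_1+\mu_2}{L_1^2}$, $\sigma_6^+=0$; $D_6$: $L_2>\mu_2\ge L_1>\mu_1\ge0$.
   Context: For $\mu\in\mathbb{R}$ and $L\in(\mu,\infty]$, $\mathcal{F}_{\mu,L}(\mathbb{R}^d)$ is the class of proper lower semicontinuous $f:\mathbb{R}^d\to\mathbb{R}$ with $f-\frac{\mu}{2}\|\cdot\|^2$ convex and, if $L<\infty$, $\frac{L}{2}\|\cdot\|^2-f$ convex ($L$ may be nonpositive). Subdifferential: $\partial f(x) = \{g+\mu x : g\in\partial(f-\frac{\mu}{2}\|\cdot\|^2)(x)\}$ (convex subdifferential), equal to $\{\nabla f(x)\}$ where $f$ is differentiable. $\operatorname{dom}\partial f=\{x:\partial f(x)\ne\emptyset\}$, $\operatorname{range}\partial f=\bigcup_x\partial f(x)$. Conventions: $1/\infty=0$ and expressions with an infinite parameter are understood as limits. *)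

theory Defs
  imports "HOL-Analysis.Analysis"
begin

definition lsc :: "('a::topological_space \<Rightarrow> real) \<Rightarrow> bool" where
  "lsc f \<longleftrightarrow> (\<forall>c. closed {x. f x \<le> c})"

definition Fclass :: "real \<Rightarrow> ereal \<Rightarrow> ('a::euclidean_space \<Rightarrow> real) \<Rightarrow> bool" where
  "Fclass \<mu> L f \<longleftrightarrow> ereal \<mu> < L \<and> lsc f \<and>
     convex_on UNIV (\<lambda>x. f x - \<mu> / 2 * (norm x)\<^sup>2) \<and>
     (L \<noteq> \<infinity> \<longrightarrow> convex_on UNIV (\<lambda>x. real_of_ereal L / 2 * (norm x)\<^sup>2 - f x))"

definition subdiff :: "real \<Rightarrow> ('a::euclidean_space \<Rightarrow> real) \<Rightarrow> 'a \<Rightarrow> 'a set" where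
  "subdiff \<mu> f x = {g + \<mu> *\<^sub>R x | g.
      \<forall>y. f y - \<mu> / 2 * (norm y)\<^sup>2 \<ge> f x - \<mu> / 2 * (norm x)\<^sup>2 + inner g (y - x)}"

definition dom_subdiff :: "real \<Rightarrow> ('a::euclidean_space \<Rightarrow> real) \<Rightarrow> 'a set" where
  "dom_subdiff \<mu> f = {x. subdiff \<mu> f x \<noteq> {}}"

definition range_subdiff :: "real \<Rightarrow> ('a::euclidean_space \<Rightarrow> real) \<Rightarrow> 'a set" where
  "range_subdiff \<mu> f = (\<Union>x. subdiff \<mu> f x)"

definition einv :: "ereal \<Rightarrow> real" where
  "einv L = (if L = \<infinity> then 0 else 1 / real_of_ereal L)"

definition Bq :: "real \<Rightarrow> real \<Rightarrow> ereal \<Rightarrow> real" where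
  "Bq \<mu>1 \<mu>2 L2 = 1 / \<mu>1 + 1 / \<mu>2 + einv L2"

(* E := (L2+mu2)/(L1 L2) * (L2-L1)/(-mu2) + 1/mu1 - 1/L1  (used only for finite L2,
   mu1 > 0, mu2 < 0); for L1 = \<infinity> its limit value. *)
definition Eq :: "real \<Rightarrow> ereal \<Rightarrow> real \<Rightarrow> ereal \<Rightarrow> real" where
  "Eq \<mu>1 L1 \<mu>2 L2 = (let l1 = real_of_ereal L1; l2 = real_of_ereal L2 in
     if L1 = \<infinity> then (l2 + \<mu>2) / (\<mu>2 * l2) + 1 / \<mu>1
     else (l2 + \<mu>2) / (l1 * l2) * ((l2 - l1) / (- \<mu>2)) + 1 / \<mu>1 - 1 / l1)"

definition sigma :: "nat \<Rightarrow> real \<Rightarrow> ereal \<Rightarrow> real \<Rightarrow> ereal \<Rightarrow> real" where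
  "sigma i \<mu>1 L1 \<mu>2 L2 =
    (let l1 = real_of_ereal L1; l2 = real_of_ereal L2; B = Bq \<mu>1 \<mu>2 L2 in
     if i = 1 then einv L2 * (l2 - \<mu>1) * einv (L1 - ereal \<mu>1)
     else if i = 2 then (if \<mu>2 = 0 then einv L1
                        else einv L1 * (1 + (einv L1 - einv L2) / (1 / \<mu>2 - einv L2)))
     else if i = 3 then einv L1 * B / (B - einv L1)
     else if i = 4 then 0
     else if i = 5 then 0
     else (l1 + \<mu>2) / l1\<^sup>2)"

definition sigma_plus :: "nat \<Rightarrow> real \<Rightarrow> ereal \<Rightarrow> real \<Rightarrow> ereal \<Rightarrow> real" where
  "sigma_plus i \<mu>1 L1 \<mu>2 L2 =
    (let l1 = real_of_ereal L1; l2 = real_of_ereal L2 in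
     if i = 1 then (if \<mu>1 = 0 then einv L2
                   else einv L2 * (1 + (einv L2 - einv L1) / (1 / \<mu>1 - einv L1)))
     else if i = 2 then einv L1 * (l1 - \<mu>2) * einv (L2 - ereal \<mu>2)
     else if i = 3 then einv (L2 + ereal \<mu>2)
     else if i = 4 then (\<mu>1 + \<mu>2) / \<mu>2\<^sup>2
     else if i = 5 then (l2 + \<mu>1) / l2\<^sup>2
     else 0)"

definition regime_dom :: "nat \<Rightarrow> real \<Rightarrow> ereal \<Rightarrow> real \<Rightarrow> ereal \<Rightarrow> bool" where
  "regime_dom i \<mu>1 L1 \<mu>2 L2 =
    (let B = Bq \<mu>1 \<mu>2 L2; E = Eq \<mu>1 L1 \<mu>2 L2 in
     if i = 1 then L2 \<le> L1 \<and> ereal \<mu>1 \<le> L2 \<and> 0 \<le> \<mu>1 \<and> ereal \<mu>2 < L1 \<and>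
                   (0 \<le> \<mu>2 \<or> (\<mu>2 < 0 \<and> 0 < \<mu>1 \<and> E \<le> 0))
     else if i = 2 then L1 \<le> L2 \<and> ereal \<mu>2 \<le> L1 \<and> 0 \<le> \<mu>2 \<and> ereal \<mu>1 < L2 \<and> 0 \<le> \<mu>1
     else if i = 3 then \<mu>2 < 0 \<and> 0 < \<mu>1 \<and> ereal \<mu>1 < L2 \<and> ereal \<mu>2 < L1 \<and> B \<le> 0 \<and>
                   ((L2 \<le> L1 \<and> 0 \<le> E) \<or> L1 < L2)
     else if i = 4 then \<mu>2 < 0 \<and> 0 < \<mu>1 \<and> ereal \<mu>2 < L1 \<and>
                   ((0 < B \<and> ereal \<mu>1 < L2) \<or> (0 < B \<and> 0 < L2 \<and> L2 \<le> ereal \<mu>1) \<or>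
                    (B \<le> 0 \<and> L2 \<le> 0))
     else if i = 5 then ereal \<mu>1 < L1 \<and> L2 \<le> ereal \<mu>1 \<and> 0 < L2 \<and> ereal \<mu>2 < L1 \<and>
                   (0 \<le> \<mu>2 \<or> (\<mu>2 < 0 \<and> B \<le> 0))
     else if i = 6 then ereal \<mu>2 < L2 \<and> L1 \<le> ereal \<mu>2 \<and> ereal \<mu>1 < L1 \<and> 0 \<le> \<mu>1
     else False)"

end

theory Submission
  imports Defs
begin

lemma small_t:
  fixes a b c :: real
  assumes "\<And>t. 0 < t \<Longrightarrow> t \<le> 1 \<Longrightarrow> a \<le> b + t * c"
  shows "a \<le> b"
proof (rule ccontr)
  assume "\<not> a \<le> b"
  define t where "t = min 1 ((a - b) / (2 * (\<bar>c\<bar> + 1)))"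
  have pos: "0 < (a - b) / (2 * (\<bar>c\<bar> + 1))" using \<open>\<not> a \<le> b\<close> by (simp add: add_pos_nonneg)
  have t0: "0 < t" "t \<le> 1" using pos by (auto simp: t_def)
  have "t * c \<le> t * (\<bar>c\<bar> + 1)" using t0 by (intro mult_left_mono) auto
  also have "\<dots> \<le> (a - b) / (2 * (\<bar>c\<bar> + 1)) * (\<bar>c\<bar> + 1)"
    by (intro mult_right_mono) (auto simp: t_def)
  also have "\<dots> = (a - b) / 2" by (simp add: field_simps add_pos_nonneg)
  finally have "t * c \<le> (a - b) / 2" .
  with assms[OF t0] \<open>\<not> a \<le> b\<close> show False by argo
qed

lemma subgrad_lower:
  fixes f :: "'a::euclidean_space \<Rightarrow> real"
  assumes "g \<in> subdiff \<mu> f x"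
  shows "f y \<ge> f x + inner g (y - x) + \<mu> / 2 * (norm (y - x))\<^sup>2"
proof -
  obtain h where g: "g = h + \<mu> *\<^sub>R x"
    and h: "f y - \<mu> / 2 * (norm y)\<^sup>2 \<ge> f x - \<mu> / 2 * (norm x)\<^sup>2 + inner h (y - x)"
    using assms unfolding subdiff_def by blast
  have e: "(norm y)\<^sup>2 = (norm x)\<^sup>2 + 2 * inner x (y - x) + (norm (y - x))\<^sup>2"
    by (simp add: power2_norm_eq_inner algebra_simps inner_commute)
  show ?thesis using h e unfolding g by (simp add: inner_add_left algebra_simps)
qed

lemma aux: fixes fy fx fz G D l \<mu> t Nz Ny Nx :: real
 assumes h1: "(1+t)*(l/2*Nx - fx) \<le> (l/2*Nz - fz) + t*(l/2*Ny - fy)"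
 and h2: "fz \<ge> fx - t*G + \<mu>/2*(t^2*D)"
 and h3: "Nz + t*Ny - (1+t)*Nx = (t^2+t)*D"
 shows "t*fy \<le> t*(fx + G + l/2*D + t*((l-\<mu>)/2*D))"
proof -
  have e: "l*(Nz + t*Ny - (1+t)*Nx) = l*((t^2+t)*D)" using h3 by simp
  have "t*fy \<le> l/2*(Nz + t*Ny - (1+t)*Nx) - fz + (1+t)*fx" using h1 by (simp add: field_simps)
  also have "\<dots> = l/2*((t^2+t)*D) - fz + (1+t)*fx" using h3 by simp
  also have "\<dots> \<le> l/2*((t^2+t)*D) - (fx - t*G + \<mu>/2*(t^2*D)) + (1+t)*fx" using h2 by simp
  also have "\<dots> = t*(fx + G + l/2*D + t*((l-\<mu>)/2*D))" by (simp add: field_simps power2_eq_square)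
  finally show ?thesis .
qed

lemma descent:
  fixes f :: "'a::euclidean_space \<Rightarrow> real"
  assumes F: "Fclass \<mu> (ereal l) f" and g: "g \<in> subdiff \<mu> f x"
  shows "f y \<le> f x + inner g (y - x) + l / 2 * (norm (y - x))\<^sup>2"
proof (rule small_t)
  fix t :: real assume t: "0 < t" "t \<le> 1"
  define d where "d = y - x"
  define z where "z = x - t *\<^sub>R d"
  have cv: "convex_on UNIV (\<lambda>x. l / 2 * (norm x)\<^sup>2 - f x)"
    using F unfolding Fclass_def by auto
  define \<theta> where "\<theta> = t / (1 + t)"
  have th: "0 \<le> \<theta>" "\<theta> \<le> 1" using t by (auto simp: \<theta>_def)
  have xe: "(1 - \<theta>) *\<^sub>R z + \<theta> *\<^sub>R y = x"
  proof -
    have "(1 + t) *\<^sub>R ((1 - \<theta>) *\<^sub>R z + \<theta> *\<^sub>R y) = (1 + t) *\<^sub>R x"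
      using t by (simp add: \<theta>_def z_def d_def algebra_simps field_simps scaleR_add_right)
    thus ?thesis using t by simp
  qed
  have c1: "l / 2 * (norm x)\<^sup>2 - f x \<le> (1 - \<theta>) * (l / 2 * (norm z)\<^sup>2 - f z) + \<theta> * (l / 2 * (norm y)\<^sup>2 - f y)"
    using convex_onD[OF cv th, of z y] xe by simp
  have c2: "(1 + t) * (l / 2 * (norm x)\<^sup>2 - f x) \<le> (l / 2 * (norm z)\<^sup>2 - f z) + t * (l / 2 * (norm y)\<^sup>2 - f y)"
  proof -
    have "(1 + t) * (l / 2 * (norm x)\<^sup>2 - f x) \<le> (1 + t) * ((1 - \<theta>) * (l / 2 * (norm z)\<^sup>2 - f z) + \<theta> * (l / 2 * (norm y)\<^sup>2 - f y))"
      using c1 t by (intro mult_left_mono) auto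
    also have "\<dots> = (l / 2 * (norm z)\<^sup>2 - f z) + t * (l / 2 * (norm y)\<^sup>2 - f y)"
    proof -
      have a: "(1 + t) * (1 - \<theta>) = 1" "(1 + t) * \<theta> = t" using t by (auto simp: \<theta>_def field_simps)
      show ?thesis by (simp only: distrib_left mult.assoc[symmetric] a) simp
    qed
    finally show ?thesis .
  qed
  have lz: "f z \<ge> f x + inner g (z - x) + \<mu> / 2 * (norm (z - x))\<^sup>2" by (rule subgrad_lower[OF g])
  have n1: "(norm z)\<^sup>2 = (norm x)\<^sup>2 - 2 * t * inner x d + t\<^sup>2 * (norm d)\<^sup>2"
    unfolding power2_norm_eq_inner z_def by (simp add: algebra_simps inner_commute power2_eq_square)
  have n2: "(norm y)\<^sup>2 = (norm x)\<^sup>2 + 2 * inner x d + (norm d)\<^sup>2"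
    by (simp add: d_def power2_norm_eq_inner algebra_simps inner_commute)
  have n3: "inner g (z - x) = - t * inner g d" by (simp add: z_def)
  have n4: "(norm (z - x))\<^sup>2 = t\<^sup>2 * (norm d)\<^sup>2" by (simp add: z_def power2_eq_square)
  have "t * f y \<le> t * (f x + inner g d + l / 2 * (norm d)\<^sup>2 + t * ((l - \<mu>) / 2 * (norm d)\<^sup>2))"
  proof (rule aux[OF c2])
    show "f z \<ge> f x - t * inner g d + \<mu>/2*(t^2*(norm d)\<^sup>2)" using lz n3 n4 by simp
    show "(norm z)\<^sup>2 + t*(norm y)\<^sup>2 - (1+t)*(norm x)\<^sup>2 = (t^2+t)*(norm d)\<^sup>2"
      using n1 n2 by (simp add: field_simps power2_eq_square)
  qed
  hence "f y \<le> f x + inner g d + l / 2 * (norm d)\<^sup>2 + t * ((l - \<mu>) / 2 * (norm d)\<^sup>2)"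
    using t by simp
  thus "f y \<le> f x + inner g (y - x) + l / 2 * (norm (y - x))\<^sup>2 + t * ((l - \<mu>) / 2 * (norm (y - x))\<^sup>2)"
    by (simp add: d_def)
qed


lemma Fclass_lt: "Fclass \<mu> (ereal l) f \<Longrightarrow> \<mu> < l"
  unfolding Fclass_def by auto

lemma interp:
  fixes f :: "'a::euclidean_space \<Rightarrow> real"
  assumes F: "Fclass \<mu> (ereal l) f" and gp: "gp \<in> subdiff \<mu> f p" and gq: "gq \<in> subdiff \<mu> f q"
  shows "f p - f q - inner gq (p - q) \<ge> \<mu> / 2 * (norm (p - q))\<^sup>2 + 1 / (2 * (l - \<mu>)) * (norm (gp - gq - \<mu> *\<^sub>R (p - q)))\<^sup>2"
proof -
  define c where "c = l - \<mu>"
  have c: "0 < c" using Fclass_lt[OF F] by (simp add: c_def)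
  define e where "e = p - q"
  define w where "w = gq - gp + \<mu> *\<^sub>R e"
  define t where "t = (1 / c) *\<^sub>R w"
  define z where "z = p + t"
  have wt: "w = c *\<^sub>R t" using c by (simp add: t_def)
  have l1: "f z \<ge> f q + inner gq (z - q) + \<mu> / 2 * (norm (z - q))\<^sup>2" by (rule subgrad_lower[OF gq])
  have l2: "f z \<le> f p + inner gp (z - p) + l / 2 * (norm (z - p))\<^sup>2" by (rule descent[OF F gp])
  have zq: "z - q = e + t" and zp: "z - p = t" by (simp_all add: z_def e_def)
  have n1: "(norm (e + t))\<^sup>2 = (norm e)\<^sup>2 + 2 * inner e t + (norm t)\<^sup>2"
    unfolding power2_norm_eq_inner by (simp add: algebra_simps inner_commute)
  have i1: "inner gq (e + t) = inner gq e + inner gq t" by (simp add: inner_add_right)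
  have i2: "inner gq t - inner gp t + \<mu> * inner e t = c * (norm t)\<^sup>2"
  proof -
    have "inner gq t - inner gp t + \<mu> * inner e t = inner w t" by (simp add: w_def algebra_simps)
    also have "\<dots> = c * (norm t)\<^sup>2" by (simp add: wt power2_norm_eq_inner)
    finally show ?thesis .
  qed
  have n2: "(norm (gp - gq - \<mu> *\<^sub>R (p - q)))\<^sup>2 = c\<^sup>2 * (norm t)\<^sup>2"
  proof -
    have "gp - gq - \<mu> *\<^sub>R (p - q) = - w" by (simp add: w_def e_def)
    hence "norm (gp - gq - \<mu> *\<^sub>R (p - q)) = \<bar>c\<bar> * norm t" by (simp add: wt)
    thus ?thesis by (simp add: power_mult_distrib)
  qed
  have main: "f p - f q - inner gq e \<ge> \<mu> / 2 * (norm e)\<^sup>2 + c / 2 * (norm t)\<^sup>2"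
  proof -
    have "f p - f q \<ge> inner gq (e + t) + \<mu> / 2 * (norm (e + t))\<^sup>2 - inner gp t - l / 2 * (norm t)\<^sup>2"
      using l1 l2 zq zp by simp
    moreover have "inner gq (e + t) + \<mu> / 2 * (norm (e + t))\<^sup>2 - inner gp t - l / 2 * (norm t)\<^sup>2
       = inner gq e + \<mu> / 2 * (norm e)\<^sup>2 + (inner gq t - inner gp t + \<mu> * inner e t) + (\<mu> - l) / 2 * (norm t)\<^sup>2"
      unfolding i1 n1 by (simp add: field_simps)
    moreover have "(inner gq t - inner gp t + \<mu> * inner e t) + (\<mu> - l) / 2 * (norm t)\<^sup>2 = c / 2 * (norm t)\<^sup>2"
      unfolding i2 by (simp add: c_def field_simps)
    ultimately show ?thesis by linarith
  qed
  have eq: "1 / (2 * (l - \<mu>)) * (norm (gp - gq - \<mu> *\<^sub>R (p - q)))\<^sup>2 = c / 2 * (norm t)\<^sup>2"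
    unfolding n2 c_def[symmetric] using c by (simp add: field_simps power2_eq_square)
  show ?thesis using main eq unfolding e_def by linarith
qed


definition side_ok :: "real \<Rightarrow> real \<Rightarrow> real \<Rightarrow> ('a::euclidean_space \<Rightarrow> real) \<Rightarrow> bool" where
  "side_ok \<mu> \<sigma> \<psi> f \<longleftrightarrow> (\<forall>p q gp gq. gp \<in> subdiff \<mu> f p \<longrightarrow> gq \<in> subdiff \<mu> f q \<longrightarrow>
     f p - f q - inner gq (p - q) \<ge> \<sigma> / 2 * (norm (gp - gq))\<^sup>2 + \<psi> * (norm (p - q))\<^sup>2)"

lemma side_A0: "side_ok \<mu> 0 (\<mu> / 2) f"
  unfolding side_ok_def
proof (intro allI impI)
  fix p q gp gq assume "gp \<in> subdiff \<mu> f p" and gq: "gq \<in> subdiff \<mu> f q"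
  show "0 / 2 * (norm (gp - gq))\<^sup>2 + \<mu> / 2 * (norm (p - q))\<^sup>2 \<le> f p - f q - inner gq (p - q)"
    using subgrad_lower[OF gq, of p] by simp
qed

lemma side_mono: "side_ok \<mu> \<sigma> \<psi> f \<Longrightarrow> \<psi>' \<le> \<psi> \<Longrightarrow> side_ok \<mu> \<sigma> \<psi>' f"
  unfolding side_ok_def
  by (smt (verit, ccfv_SIG) mult_right_mono zero_le_power2)

lemma quad:
  fixes e w :: "'a::real_inner"
  assumes a: "0 \<le> a" and b: "0 \<le> b" and c: "c\<^sup>2 \<le> 4 * a * b"
  shows "0 \<le> a * (norm e)\<^sup>2 + b * (norm w)\<^sup>2 + c * inner w e"
proof (cases "a = 0")
  case True
  hence "c = 0" using c by simp
  thus ?thesis using True b by simp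
next
  case False
  hence a0: "0 < a" using a by simp
  have "0 \<le> (norm (a *\<^sub>R e + (c / 2) *\<^sub>R w))\<^sup>2" by simp
  also have "\<dots> = a\<^sup>2 * (norm e)\<^sup>2 + a * c * inner w e + c\<^sup>2 / 4 * (norm w)\<^sup>2"
    unfolding power2_norm_eq_inner by (simp add: algebra_simps inner_commute power2_eq_square)
  also have "\<dots> \<le> a\<^sup>2 * (norm e)\<^sup>2 + a * c * inner w e + a * b * (norm w)\<^sup>2"
    using c by (intro add_left_mono mult_right_mono) auto
  also have "\<dots> = a * (a * (norm e)\<^sup>2 + b * (norm w)\<^sup>2 + c * inner w e)"
    by (simp add: algebra_simps power2_eq_square)
  finally show ?thesis using a0 by (simp add: zero_le_mult_iff)
qed

lemma side_gen:
  fixes f :: "'a::euclidean_space \<Rightarrow> real"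
  assumes F: "Fclass \<mu> (ereal l) f" and s: "1 \<le> s"
    and a: "0 \<le> s * (\<mu> + \<mu>\<^sup>2 / (l - \<mu>)) / 2 - \<psi>"
    and b: "0 \<le> s / (l - \<mu>) / 2 - \<sigma> / 2"
    and c: "(- s * \<mu> / (l - \<mu>) - (s - 1) / 2)\<^sup>2 \<le> 4 * (s * (\<mu> + \<mu>\<^sup>2 / (l - \<mu>)) / 2 - \<psi>) * (s / (l - \<mu>) / 2 - \<sigma> / 2)"
  shows "side_ok \<mu> \<sigma> \<psi> f"
  unfolding side_ok_def
proof (intro allI impI)
  fix p q gp gq assume gp: "gp \<in> subdiff \<mu> f p" and gq: "gq \<in> subdiff \<mu> f q"
  define k where "k = 1 / (l - \<mu>)"
  have lm: "\<mu> < l" using Fclass_lt[OF F] .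
  have k0: "0 < k" using lm by (simp add: k_def)
  define e where "e = p - q"
  define w where "w = gp - gq"
  define X where "X = (norm e)\<^sup>2"
  define Y where "Y = (norm w)\<^sup>2"
  define Z where "Z = inner w e"
  define R where "R = \<mu> / 2 * X + 1 / (2 * (l - \<mu>)) * (Y - 2 * \<mu> * Z + \<mu>\<^sup>2 * X)"
  have nn: "(norm (gp - gq - \<mu> *\<^sub>R (p - q)))\<^sup>2 = Y - 2 * \<mu> * Z + \<mu>\<^sup>2 * X"
    unfolding X_def Y_def Z_def e_def w_def power2_norm_eq_inner
    by (simp add: algebra_simps inner_commute power2_eq_square)
  have nn2: "(norm (gq - gp - \<mu> *\<^sub>R (q - p)))\<^sup>2 = Y - 2 * \<mu> * Z + \<mu>\<^sup>2 * X"
    unfolding X_def Y_def Z_def e_def w_def power2_norm_eq_inner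
    by (simp add: algebra_simps inner_commute power2_eq_square)
  have nx: "(norm (q - p))\<^sup>2 = X" unfolding X_def e_def by (simp add: norm_minus_commute)
  have I1: "f p - f q - inner gq (p - q) \<ge> R"
  proof -
    have h: "f p - f q - inner gq (p - q) \<ge> \<mu> / 2 * (norm (p - q))\<^sup>2 + 1 / (2 * (l - \<mu>)) * (norm (gp - gq - \<mu> *\<^sub>R (p - q)))\<^sup>2"
      by (rule interp[OF F gp gq])
    show ?thesis using h unfolding nn R_def X_def e_def by linarith
  qed
  have I2: "f q - f p - inner gp (q - p) \<ge> R"
  proof -
    have h: "f q - f p - inner gp (q - p) \<ge> \<mu> / 2 * (norm (q - p))\<^sup>2 + 1 / (2 * (l - \<mu>)) * (norm (gq - gp - \<mu> *\<^sub>R (q - p)))\<^sup>2"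
      by (rule interp[OF F gq gp])
    show ?thesis using h unfolding nn2 nx R_def by linarith
  qed
  have sumZ: "(f p - f q - inner gq (p - q)) + (f q - f p - inner gp (q - p)) = Z"
    unfolding Z_def w_def e_def by (simp add: algebra_simps inner_commute)
  define \<Delta> where "\<Delta> = f p - f q - inner gq (p - q)"
  have M: "2 * R - Z \<le> 0" using I1 I2 sumZ by linarith
  have D1: "\<Delta> \<ge> R + (s - 1) / 2 * (2 * R - Z)"
  proof -
    have "(s - 1) / 2 * (2 * R - Z) \<le> 0" using M s by (simp add: mult_nonneg_nonpos)
    thus ?thesis using I1 unfolding \<Delta>_def by linarith
  qed
  define A where "A = s * (\<mu> + \<mu>\<^sup>2 / (l - \<mu>)) / 2 - \<psi>"
  define B where "B = s / (l - \<mu>) / 2 - \<sigma> / 2"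
  define C where "C = - s * \<mu> / (l - \<mu>) - (s - 1) / 2"
  have eq: "R + (s - 1) / 2 * (2 * R - Z) - \<sigma> / 2 * Y - \<psi> * X = A * X + B * Y + C * Z"
  proof -
    have ne: "l - \<mu> \<noteq> 0" using lm by simp
    have k1: "1 / (2 * (l - \<mu>)) = k / 2" "\<mu>\<^sup>2 / (l - \<mu>) = \<mu>\<^sup>2 * k"
      "s / (l - \<mu>) = s * k" "- s * \<mu> / (l - \<mu>) = - s * \<mu> * k"
      unfolding k_def by (simp_all add: field_simps)
    show ?thesis unfolding R_def A_def B_def C_def k1 by (simp add: field_simps power2_eq_square)
  qed
  have "0 \<le> A * (norm e)\<^sup>2 + B * (norm w)\<^sup>2 + C * inner w e"
    using quad[of A B C e w] a b c unfolding A_def B_def C_def by simp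
  hence "0 \<le> A * X + B * Y + C * Z" unfolding X_def Y_def Z_def .
  hence "\<Delta> \<ge> \<sigma> / 2 * Y + \<psi> * X" using D1 eq by linarith
  thus "f p - f q - inner gq (p - q) \<ge> \<sigma> / 2 * (norm (gp - gq))\<^sup>2 + \<psi> * (norm (p - q))\<^sup>2"
    unfolding \<Delta>_def Y_def X_def w_def e_def .
qed


lemma sqeq: fixes x T m :: real shows "m \<noteq> 0 \<Longrightarrow> (- x * T / m)\<^sup>2 \<le> 4 * (x\<^sup>2 * T / (2 * m)) * (T / (2 * m))"
  by (simp add: field_simps power2_eq_square)

lemma A3eq: fixes m \<mu> \<sigma> :: real
  shows "m \<noteq> 0 \<Longrightarrow> 1 - \<sigma> * m \<noteq> 0 \<Longrightarrow>
    1 * (\<mu> + \<mu>\<^sup>2 / m) / 2 - \<mu> * (1 - (m + \<mu>) * \<sigma>) / (2 * (1 - \<sigma> * m)) = \<mu>\<^sup>2 / (2 * m * (1 - \<sigma> * m))"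
  by (simp add: field_simps power2_eq_square)

lemma A3eq2: fixes m \<mu> T :: real
  shows "m \<noteq> 0 \<Longrightarrow> T \<noteq> 0 \<Longrightarrow> (- \<mu> / m)\<^sup>2 \<le> 4 * (\<mu>\<^sup>2 / (2 * m * T)) * (T / (2 * m))"
  by (simp add: field_simps power2_eq_square)

lemma side_A1:
  fixes f :: "'a::euclidean_space \<Rightarrow> real"
  assumes F: "Fclass \<mu> (ereal l) f" and h1: "1 \<le> l * \<sigma>" and h2: "1 \<le> (l + \<mu>) * \<sigma>"
  shows "side_ok \<mu> \<sigma> (l * (1 - l * \<sigma>) / 2) f"
proof -
  have lm: "\<mu> < l" using Fclass_lt[OF F] .
  hence ne: "l - \<mu> \<noteq> 0" and pos: "0 < l - \<mu>" by auto
  define T where "T = (l + \<mu>) * \<sigma> - 1"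
  have T: "0 \<le> T" using h2 by (simp add: T_def)
  define s where "s = 2 * l * \<sigma> - 1"
  have s: "1 \<le> s" using h1 by (simp add: s_def)
  have ea: "s * (\<mu> + \<mu>\<^sup>2 / (l - \<mu>)) / 2 - l * (1 - l * \<sigma>) / 2 = l\<^sup>2 * T / (2 * (l - \<mu>))"
    unfolding s_def T_def using ne by (simp add: field_simps power2_eq_square)
  have eb: "s / (l - \<mu>) / 2 - \<sigma> / 2 = T / (2 * (l - \<mu>))"
    unfolding s_def T_def using ne by (simp add: field_simps)
  have ec: "- s * \<mu> / (l - \<mu>) - (s - 1) / 2 = - l * T / (l - \<mu>)"
    unfolding s_def T_def using ne by (simp add: field_simps)
  show ?thesis
  proof (rule side_gen[OF F s])
    show "0 \<le> s * (\<mu> + \<mu>\<^sup>2 / (l - \<mu>)) / 2 - l * (1 - l * \<sigma>) / 2" unfolding ea using T pos by simp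
    show "0 \<le> s / (l - \<mu>) / 2 - \<sigma> / 2" unfolding eb using T pos by simp
    show "(- s * \<mu> / (l - \<mu>) - (s - 1) / 2)\<^sup>2 \<le> 4 * (s * (\<mu> + \<mu>\<^sup>2 / (l - \<mu>)) / 2 - l * (1 - l * \<sigma>) / 2) * (s / (l - \<mu>) / 2 - \<sigma> / 2)"
      unfolding ea eb ec using sqeq[OF ne] by simp
  qed
qed

lemma side_A2:
  fixes f :: "'a::euclidean_space \<Rightarrow> real"
  assumes F: "Fclass \<mu> (ereal l) f" and h0: "\<mu> \<le> 0" and hs: "0 \<le> \<sigma>" and h2: "(l + \<mu>) * \<sigma> \<le> 1"
  shows "side_ok \<mu> \<sigma> (\<mu> * (1 - \<mu> * \<sigma>) / 2) f"
proof -
  have lm: "\<mu> < l" using Fclass_lt[OF F] .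
  hence ne: "l - \<mu> \<noteq> 0" and pos: "0 < l - \<mu>" by auto
  define T where "T = 1 - (l + \<mu>) * \<sigma>"
  have T: "0 \<le> T" using h2 by (simp add: T_def)
  define s where "s = 1 - 2 * \<mu> * \<sigma>"
  have s: "1 \<le> s" using h0 hs by (simp add: s_def mult_nonpos_nonneg)
  have ea: "s * (\<mu> + \<mu>\<^sup>2 / (l - \<mu>)) / 2 - \<mu> * (1 - \<mu> * \<sigma>) / 2 = \<mu>\<^sup>2 * T / (2 * (l - \<mu>))"
    unfolding s_def T_def using ne by (simp add: field_simps power2_eq_square)
  have eb: "s / (l - \<mu>) / 2 - \<sigma> / 2 = T / (2 * (l - \<mu>))"
    unfolding s_def T_def using ne by (simp add: field_simps)
  have ec: "- s * \<mu> / (l - \<mu>) - (s - 1) / 2 = - \<mu> * T / (l - \<mu>)"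
    unfolding s_def T_def using ne by (simp add: field_simps)
  show ?thesis
  proof (rule side_gen[OF F s])
    show "0 \<le> s * (\<mu> + \<mu>\<^sup>2 / (l - \<mu>)) / 2 - \<mu> * (1 - \<mu> * \<sigma>) / 2" unfolding ea using T pos by simp
    show "0 \<le> s / (l - \<mu>) / 2 - \<sigma> / 2" unfolding eb using T pos by simp
    show "(- s * \<mu> / (l - \<mu>) - (s - 1) / 2)\<^sup>2 \<le> 4 * (s * (\<mu> + \<mu>\<^sup>2 / (l - \<mu>)) / 2 - \<mu> * (1 - \<mu> * \<sigma>) / 2) * (s / (l - \<mu>) / 2 - \<sigma> / 2)"
      unfolding ea eb ec using sqeq[OF ne, of \<mu>] by simp
  qed
qed

lemma side_A3:
  fixes f :: "'a::euclidean_space \<Rightarrow> real"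
  assumes F: "Fclass \<mu> (ereal l) f" and h1: "\<sigma> * (l - \<mu>) < 1"
  shows "side_ok \<mu> \<sigma> (\<mu> * (1 - l * \<sigma>) / (2 * (1 - \<sigma> * (l - \<mu>)))) f"
proof -
  have lm: "\<mu> < l" using Fclass_lt[OF F] .
  hence ne: "l - \<mu> \<noteq> 0" and pos: "0 < l - \<mu>" by auto
  define T where "T = 1 - \<sigma> * (l - \<mu>)"
  have T: "0 < T" using h1 by (simp add: T_def)
  hence Tne: "T \<noteq> 0" by simp
  have s: "(1::real) \<le> 1" by simp
  have ea: "1 * (\<mu> + \<mu>\<^sup>2 / (l - \<mu>)) / 2 - \<mu> * (1 - l * \<sigma>) / (2 * (1 - \<sigma> * (l - \<mu>))) = \<mu>\<^sup>2 / (2 * (l - \<mu>) * T)"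
    using A3eq[OF ne, of \<sigma> \<mu>] Tne unfolding T_def by simp
  have eb: "1 / (l - \<mu>) / 2 - \<sigma> / 2 = T / (2 * (l - \<mu>))"
    unfolding T_def using ne by (simp add: field_simps)
  have ec: "- 1 * \<mu> / (l - \<mu>) - (1 - 1) / 2 = - \<mu> / (l - \<mu>)"
    by simp
  show ?thesis
  proof (rule side_gen[OF F s])
    show "0 \<le> 1 * (\<mu> + \<mu>\<^sup>2 / (l - \<mu>)) / 2 - \<mu> * (1 - l * \<sigma>) / (2 * (1 - \<sigma> * (l - \<mu>)))" unfolding ea using T pos by simp
    show "0 \<le> 1 / (l - \<mu>) / 2 - \<sigma> / 2" unfolding eb using T pos by simp
    show "(- 1 * \<mu> / (l - \<mu>) - (1 - 1) / 2)\<^sup>2 \<le> 4 * (1 * (\<mu> + \<mu>\<^sup>2 / (l - \<mu>)) / 2 - \<mu> * (1 - l * \<sigma>) / (2 * (1 - \<sigma> * (l - \<mu>)))) * (1 / (l - \<mu>) / 2 - \<sigma> / 2)"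
      unfolding ea eb ec using A3eq2[OF ne Tne] by simp
  qed
qed


definition good :: "nat \<Rightarrow> real \<Rightarrow> ereal \<Rightarrow> real \<Rightarrow> ereal \<Rightarrow> ('a::euclidean_space \<Rightarrow> real) \<Rightarrow> ('a \<Rightarrow> real) \<Rightarrow> bool" where
  "good i \<mu>1 L1 \<mu>2 L2 f1 f2 \<longleftrightarrow> (\<exists>\<psi>1 \<psi>2. side_ok \<mu>1 (sigma i \<mu>1 L1 \<mu>2 L2) \<psi>1 f1 \<and>
      side_ok \<mu>2 (sigma_plus i \<mu>1 L1 \<mu>2 L2) \<psi>2 f2 \<and> 0 \<le> \<psi>1 + \<psi>2 \<and>
      0 \<le> sigma i \<mu>1 L1 \<mu>2 L2 \<and> 0 \<le> sigma_plus i \<mu>1 L1 \<mu>2 L2)"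

lemma goodI:
  assumes "side_ok \<mu>1 (sigma i \<mu>1 L1 \<mu>2 L2) \<psi>1 f1" "side_ok \<mu>2 (sigma_plus i \<mu>1 L1 \<mu>2 L2) \<psi>2 f2"
    "0 \<le> \<psi>1 + \<psi>2" "0 \<le> sigma i \<mu>1 L1 \<mu>2 L2" "0 \<le> sigma_plus i \<mu>1 L1 \<mu>2 L2"
  shows "good i \<mu>1 L1 \<mu>2 L2 f1 f2"
  unfolding good_def using assms by blast

lemma Fclass_cases:
  assumes "Fclass \<mu> L f"
  obtains (fin) l where "L = ereal l" "\<mu> < l" | (inf) "L = \<infinity>"
  using assms unfolding Fclass_def by (cases L) auto

lemma reg6:
  fixes f1 f2 :: "'a::euclidean_space \<Rightarrow> real"
  assumes F1: "Fclass \<mu>1 L1 f1" and F2: "Fclass \<mu>2 L2 f2" and D: "regime_dom 6 \<mu>1 L1 \<mu>2 L2"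
  shows "good 6 \<mu>1 L1 \<mu>2 L2 f1 f2"
proof -
  have D': "ereal \<mu>2 < L2" "L1 \<le> ereal \<mu>2" "ereal \<mu>1 < L1" "0 \<le> \<mu>1"
    using D by (auto simp: regime_dom_def Let_def)
  from F1 show ?thesis
  proof (cases rule: Fclass_cases)
    case (fin l1)
    have l1: "0 < l1" "l1 \<le> \<mu>2" "\<mu>1 < l1" using D' fin by auto
    have sg: "sigma 6 \<mu>1 L1 \<mu>2 L2 = (l1 + \<mu>2) / l1\<^sup>2" by (simp add: sigma_def Let_def fin)
    have sp: "sigma_plus 6 \<mu>1 L1 \<mu>2 L2 = 0" by (simp add: sigma_plus_def Let_def)
    have a1: "1 \<le> l1 * ((l1 + \<mu>2) / l1\<^sup>2)" using l1 by (simp add: field_simps power2_eq_square)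
    have pr: "0 \<le> \<mu>1 * \<mu>2" "0 \<le> \<mu>1 * l1" "0 \<le> \<mu>2 * l1" using l1 D'(4) by auto
    have a2: "1 \<le> (l1 + \<mu>1) * ((l1 + \<mu>2) / l1\<^sup>2)" using l1 pr by (simp add: field_simps power2_eq_square)
    show ?thesis
    proof (rule goodI)
      show "side_ok \<mu>1 (sigma 6 \<mu>1 L1 \<mu>2 L2) (l1 * (1 - l1 * ((l1 + \<mu>2) / l1\<^sup>2)) / 2) f1"
        unfolding sg using side_A1[OF F1[unfolded fin] a1 a2] .
      show "side_ok \<mu>2 (sigma_plus 6 \<mu>1 L1 \<mu>2 L2) (\<mu>2 / 2) f2" unfolding sp by (rule side_A0)
      show "0 \<le> l1 * (1 - l1 * ((l1 + \<mu>2) / l1\<^sup>2)) / 2 + \<mu>2 / 2" using l1 by (simp add: field_simps power2_eq_square)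
      show "0 \<le> sigma 6 \<mu>1 L1 \<mu>2 L2" unfolding sg using l1 by simp
      show "0 \<le> sigma_plus 6 \<mu>1 L1 \<mu>2 L2" unfolding sp by simp
    qed
  next
    case inf thus ?thesis using D' by simp
  qed
qed


lemma einv_fin[simp]: "einv (ereal l) = 1 / l" by (simp add: einv_def)
lemma einv_inf[simp]: "einv \<infinity> = 0" by (simp add: einv_def)

lemma Bq_fin: "Bq \<mu>1 \<mu>2 (ereal l) = 1 / \<mu>1 + 1 / \<mu>2 + 1 / l" by (simp add: Bq_def)
lemma Bq_inf: "Bq \<mu>1 \<mu>2 \<infinity> = 1 / \<mu>1 + 1 / \<mu>2" by (simp add: Bq_def)

lemma B_mult:
  fixes m1 m2 l :: real
  assumes "0 < m1" "m2 < 0" "l \<noteq> 0"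
  shows "(1 / m1 + 1 / m2 + 1 / l) * (m1 * m2 * l) = m2 * l + m1 * l + m1 * m2"
  using assms by (simp add: field_simps)

lemma B_le0:
  fixes m1 m2 l :: real
  assumes "0 < m1" "m2 < 0" "0 < l" "1 / m1 + 1 / m2 + 1 / l \<le> 0"
  shows "0 \<le> m2 * l + m1 * l + m1 * m2"
proof -
  have "0 \<le> (1 / m1 + 1 / m2 + 1 / l) * (m1 * m2 * l)"
    using assms by (intro mult_nonpos_nonpos) (auto simp: mult_pos_neg mult_neg_pos mult_neg_neg less_imp_le)
  thus ?thesis using B_mult[of m1 m2 l] assms by simp
qed

lemma B_gt0:
  fixes m1 m2 l :: real
  assumes "0 < m1" "m2 < 0" "0 < l" "0 < 1 / m1 + 1 / m2 + 1 / l"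
  shows "m2 * l + m1 * l + m1 * m2 < 0"
proof -
  have "m1 * m2 * l < 0" using assms by (simp add: mult_pos_neg mult_neg_pos)
  hence "(1 / m1 + 1 / m2 + 1 / l) * (m1 * m2 * l) < 0"
    using assms by (simp add: mult_pos_neg)
  thus ?thesis using B_mult[of m1 m2 l] assms by simp
qed

lemma reg5:
  fixes f1 f2 :: "'a::euclidean_space \<Rightarrow> real"
  assumes F1: "Fclass \<mu>1 L1 f1" and F2: "Fclass \<mu>2 L2 f2" and D: "regime_dom 5 \<mu>1 L1 \<mu>2 L2"
  shows "good 5 \<mu>1 L1 \<mu>2 L2 f1 f2"
proof -
  have D': "ereal \<mu>1 < L1" "L2 \<le> ereal \<mu>1" "0 < L2" "ereal \<mu>2 < L1"
      "0 \<le> \<mu>2 \<or> (\<mu>2 < 0 \<and> Bq \<mu>1 \<mu>2 L2 \<le> 0)"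
    using D by (auto simp: regime_dom_def Let_def)
  from F2 show ?thesis
  proof (cases rule: Fclass_cases)
    case (fin l2)
    have l2: "0 < l2" "l2 \<le> \<mu>1" using D' fin by auto
    have sg: "sigma 5 \<mu>1 L1 \<mu>2 L2 = 0" by (simp add: sigma_def Let_def)
    have sp: "sigma_plus 5 \<mu>1 L1 \<mu>2 L2 = (l2 + \<mu>1) / l2\<^sup>2" by (simp add: sigma_plus_def Let_def fin)
    have key: "0 \<le> \<mu>2 * l2 + \<mu>1 * l2 + \<mu>1 * \<mu>2"
    proof (cases "0 \<le> \<mu>2")
      case True thus ?thesis using l2 by simp
    next
      case False
      hence "\<mu>2 < 0" "1 / \<mu>1 + 1 / \<mu>2 + 1 / l2 \<le> 0" using D'(5) by (auto simp: fin Bq_fin)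
      thus ?thesis using B_le0[of \<mu>1 \<mu>2 l2] l2 by simp
    qed
    have a1: "1 \<le> l2 * ((l2 + \<mu>1) / l2\<^sup>2)" using l2 by (simp add: field_simps power2_eq_square)
    have a2: "1 \<le> (l2 + \<mu>2) * ((l2 + \<mu>1) / l2\<^sup>2)" using l2 key by (simp add: field_simps power2_eq_square)
    show ?thesis
    proof (rule goodI)
      show "side_ok \<mu>1 (sigma 5 \<mu>1 L1 \<mu>2 L2) (\<mu>1 / 2) f1" unfolding sg by (rule side_A0)
      show "side_ok \<mu>2 (sigma_plus 5 \<mu>1 L1 \<mu>2 L2) (l2 * (1 - l2 * ((l2 + \<mu>1) / l2\<^sup>2)) / 2) f2"
        unfolding sp using side_A1[OF F2[unfolded fin] a1 a2] .
      show "0 \<le> \<mu>1 / 2 + l2 * (1 - l2 * ((l2 + \<mu>1) / l2\<^sup>2)) / 2" using l2 by (simp add: field_simps power2_eq_square)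
      show "0 \<le> sigma 5 \<mu>1 L1 \<mu>2 L2" unfolding sg by simp
      show "0 \<le> sigma_plus 5 \<mu>1 L1 \<mu>2 L2" unfolding sp using l2 by simp
    qed
  next
    case inf thus ?thesis using D' by simp
  qed
qed

lemma reg4:
  fixes f1 f2 :: "'a::euclidean_space \<Rightarrow> real"
  assumes F1: "Fclass \<mu>1 L1 f1" and F2: "Fclass \<mu>2 L2 f2" and D: "regime_dom 4 \<mu>1 L1 \<mu>2 L2"
    and mc: "\<mu>1 + \<mu>2 > 0 \<or> (\<mu>1 = 0 \<and> \<mu>2 = 0)"
  shows "good 4 \<mu>1 L1 \<mu>2 L2 f1 f2"
proof -
  have D': "\<mu>2 < 0" "0 < \<mu>1" "ereal \<mu>2 < L1"
      "(0 < Bq \<mu>1 \<mu>2 L2 \<and> ereal \<mu>1 < L2) \<or> (0 < Bq \<mu>1 \<mu>2 L2 \<and> 0 < L2 \<and> L2 \<le> ereal \<mu>1) \<or>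
       (Bq \<mu>1 \<mu>2 L2 \<le> 0 \<and> L2 \<le> 0)"
    using D by (auto simp: regime_dom_def Let_def)
  have m: "0 < \<mu>1 + \<mu>2" using mc D' by auto
  have sg: "sigma 4 \<mu>1 L1 \<mu>2 L2 = 0" by (simp add: sigma_def Let_def)
  have sp: "sigma_plus 4 \<mu>1 L1 \<mu>2 L2 = (\<mu>1 + \<mu>2) / \<mu>2\<^sup>2" by (simp add: sigma_plus_def Let_def)
  from F2 show ?thesis
  proof (cases rule: Fclass_cases)
    case (fin l2)
    have key: "(l2 + \<mu>2) * (\<mu>1 + \<mu>2) \<le> \<mu>2\<^sup>2"
    proof (cases "0 < Bq \<mu>1 \<mu>2 L2")
      case True
      hence l2: "0 < l2" using D' fin by auto
      have "\<mu>2 * l2 + \<mu>1 * l2 + \<mu>1 * \<mu>2 < 0" using B_gt0[of \<mu>1 \<mu>2 l2] True D' l2 by (simp add: fin Bq_fin)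
      thus ?thesis by (simp add: algebra_simps power2_eq_square)
    next
      case False
      hence "l2 \<le> 0" using D' fin by auto
      hence "l2 + \<mu>2 < 0" using D' by simp
      hence "(l2 + \<mu>2) * (\<mu>1 + \<mu>2) \<le> 0" using m by (simp add: mult_neg_pos less_imp_le)
      thus ?thesis by (meson order_trans zero_le_power2)
    qed
    have a2: "(l2 + \<mu>2) * ((\<mu>1 + \<mu>2) / \<mu>2\<^sup>2) \<le> 1" using key D' by (simp add: field_simps)
    have s0: "0 \<le> (\<mu>1 + \<mu>2) / \<mu>2\<^sup>2" using m by simp
    show ?thesis
    proof (rule goodI)
      show "side_ok \<mu>1 (sigma 4 \<mu>1 L1 \<mu>2 L2) (\<mu>1 / 2) f1" unfolding sg by (rule side_A0)
      show "side_ok \<mu>2 (sigma_plus 4 \<mu>1 L1 \<mu>2 L2) (\<mu>2 * (1 - \<mu>2 * ((\<mu>1 + \<mu>2) / \<mu>2\<^sup>2)) / 2) f2"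
        unfolding sp using side_A2[OF F2[unfolded fin] _ s0 a2] D' by simp
      show "0 \<le> \<mu>1 / 2 + \<mu>2 * (1 - \<mu>2 * ((\<mu>1 + \<mu>2) / \<mu>2\<^sup>2)) / 2" using D' by (simp add: field_simps power2_eq_square)
      show "0 \<le> sigma 4 \<mu>1 L1 \<mu>2 L2" unfolding sg by simp
      show "0 \<le> sigma_plus 4 \<mu>1 L1 \<mu>2 L2" unfolding sp using s0 .
    qed
  next
    case inf
    have "0 < 1 / \<mu>1 + 1 / \<mu>2" using D' inf by (auto simp: Bq_inf)
    moreover have "(1 / \<mu>1 + 1 / \<mu>2) * (\<mu>1 * \<mu>2) = \<mu>1 + \<mu>2" using D' by (simp add: field_simps)
    moreover have "\<mu>1 * \<mu>2 < 0" using D' by (simp add: mult_pos_neg)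
    ultimately have "\<mu>1 + \<mu>2 < 0" by (metis mult_pos_neg)
    thus ?thesis using m by simp
  qed
qed


lemma Fclass_finE:
  assumes "Fclass \<mu> L f" "L \<noteq> \<infinity>"
  obtains l where "L = ereal l" "\<mu> < l"
  using assms unfolding Fclass_def by (cases L) auto


lemma r3side:
  fixes l \<mu> B :: real
  assumes l: "0 < l" "\<mu> < l" "0 < \<mu>" and B: "B \<le> 0"
  shows "0 \<le> 1 / l * B / (B - 1 / l)"
    and "1 / l * B / (B - 1 / l) * (l - \<mu>) < 1"
    and "\<mu> * (1 - l * (1 / l * B / (B - 1 / l))) / (2 * (1 - 1 / l * B / (B - 1 / l) * (l - \<mu>))) = \<mu> / (2 * (1 - \<mu> * B))"
proof -
  have n1: "B - 1 / l < 0" using l B by (smt (verit) divide_pos_pos)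
  have e1: "1 / l * B / (B - 1 / l) = B / (l * B - 1)" using l n1 by (simp add: field_simps)
  have lb: "l * B \<le> 0" using l B by (simp add: mult_nonneg_nonpos)
  have mb: "\<mu> * B \<le> 0" using l B by (simp add: mult_nonneg_nonpos)
  show "0 \<le> 1 / l * B / (B - 1 / l)" unfolding e1 using lb B by (simp add: divide_nonpos_neg)
  have e2: "1 - B / (l * B - 1) * (l - \<mu>) = (1 - \<mu> * B) / (1 - l * B)"
    using lb by (simp add: field_simps)
  have "0 < (1 - \<mu> * B) / (1 - l * B)" using lb mb by simp
  thus "1 / l * B / (B - 1 / l) * (l - \<mu>) < 1" unfolding e1 using e2 by linarith
  have e3: "1 - l * (B / (l * B - 1)) = 1 / (1 - l * B)" using lb by (simp add: field_simps)
  show "\<mu> * (1 - l * (1 / l * B / (B - 1 / l))) / (2 * (1 - 1 / l * B / (B - 1 / l) * (l - \<mu>))) = \<mu> / (2 * (1 - \<mu> * B))"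
  proof -
    have g: "\<mu> * (1 / a) / (2 * (b / a)) = \<mu> / (2 * b)" if "a \<noteq> 0" for a b :: real
      using that by (cases "b = 0") (simp_all add: field_simps)
    have "1 - l * B \<noteq> 0" using lb by simp
    thus ?thesis unfolding e1 e2 e3 using g by simp
  qed
qed

lemma reg3:
  fixes f1 f2 :: "'a::euclidean_space \<Rightarrow> real"
  assumes F1: "Fclass \<mu>1 L1 f1" and F2: "Fclass \<mu>2 L2 f2" and D: "regime_dom 3 \<mu>1 L1 \<mu>2 L2"
    and mc: "\<mu>1 + \<mu>2 > 0 \<or> (\<mu>1 = 0 \<and> \<mu>2 = 0)" and Lfin: "L1 \<noteq> \<infinity> \<or> L2 \<noteq> \<infinity>"
  shows "good 3 \<mu>1 L1 \<mu>2 L2 f1 f2"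
proof -
  have D': "\<mu>2 < 0" "0 < \<mu>1" "ereal \<mu>1 < L2" "ereal \<mu>2 < L1" "Bq \<mu>1 \<mu>2 L2 \<le> 0"
    using D by (auto simp: regime_dom_def Let_def)
  have m: "0 < \<mu>1 + \<mu>2" using mc D' by auto
  define B where "B = Bq \<mu>1 \<mu>2 L2"
  have sgdef: "sigma 3 \<mu>1 L1 \<mu>2 L2 = einv L1 * B / (B - einv L1)" by (simp add: sigma_def Let_def B_def)
  have spdef: "sigma_plus 3 \<mu>1 L1 \<mu>2 L2 = einv (L2 + ereal \<mu>2)" by (simp add: sigma_plus_def Let_def)
  obtain \<psi>2 where s2: "side_ok \<mu>2 (sigma_plus 3 \<mu>1 L1 \<mu>2 L2) \<psi>2 f2" and s2p: "0 \<le> sigma_plus 3 \<mu>1 L1 \<mu>2 L2"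
    and s2v: "L2 = \<infinity> \<Longrightarrow> \<psi>2 = \<mu>2 / 2"
    and s2f: "\<And>l2. L2 = ereal l2 \<Longrightarrow> \<psi>2 = \<mu>2 * l2 / (2 * (l2 + \<mu>2)) \<and> 0 < l2 + \<mu>2 \<and> 0 \<le> \<mu>2 * l2 + \<mu>1 * l2 + \<mu>1 * \<mu>2"
  proof -
    from F2 show ?thesis
    proof (cases rule: Fclass_cases)
      case (fin l2)
      have l2: "\<mu>1 < l2" using D' fin by simp
      have key: "0 \<le> \<mu>2 * l2 + \<mu>1 * l2 + \<mu>1 * \<mu>2" using B_le0[of \<mu>1 \<mu>2 l2] D' l2 by (simp add: fin Bq_fin)
      have lp: "0 < l2 + \<mu>2"
      proof -
        have "0 < - \<mu>2 * l2" using D' l2 by (simp add: mult_neg_pos)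
        hence "0 < \<mu>1 * (l2 + \<mu>2)" using key by (simp add: algebra_simps)
        thus ?thesis using D' by (simp add: zero_less_mult_iff)
      qed
      have sp: "sigma_plus 3 \<mu>1 L1 \<mu>2 L2 = 1 / (l2 + \<mu>2)" by (simp add: sigma_plus_def Let_def fin einv_def)
      have a2: "(l2 + \<mu>2) * (1 / (l2 + \<mu>2)) \<le> 1" using lp by simp
      have s0: "0 \<le> 1 / (l2 + \<mu>2)" using lp by simp
      have so0: "side_ok \<mu>2 (sigma_plus 3 \<mu>1 L1 \<mu>2 L2) (\<mu>2 * (1 - \<mu>2 * (1 / (l2 + \<mu>2))) / 2) f2"
        unfolding sp using side_A2[OF F2[unfolded fin] _ s0 a2] D' by simp
      have eq: "\<mu>2 * l2 / (2 * (l2 + \<mu>2)) = \<mu>2 * (1 - \<mu>2 * (1 / (l2 + \<mu>2))) / 2"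
        using lp by (simp add: field_simps)
      have so: "side_ok \<mu>2 (sigma_plus 3 \<mu>1 L1 \<mu>2 L2) (\<mu>2 * l2 / (2 * (l2 + \<mu>2))) f2"
        unfolding eq by (rule so0)
      show ?thesis
      proof (rule that[OF so])
        show "0 \<le> sigma_plus 3 \<mu>1 L1 \<mu>2 L2" using sp s0 by simp
        show "L2 = \<infinity> \<Longrightarrow> \<mu>2 * l2 / (2 * (l2 + \<mu>2)) = \<mu>2 / 2" using fin by simp
        show "\<And>l2'. L2 = ereal l2' \<Longrightarrow> \<mu>2 * l2 / (2 * (l2 + \<mu>2)) = \<mu>2 * l2' / (2 * (l2' + \<mu>2)) \<and> 0 < l2' + \<mu>2 \<and> 0 \<le> \<mu>2 * l2' + \<mu>1 * l2' + \<mu>1 * \<mu>2"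
          using fin lp key by auto
      qed
    next
      case inf
      have sp: "sigma_plus 3 \<mu>1 L1 \<mu>2 L2 = 0" by (simp add: sigma_plus_def Let_def inf einv_def)
      show ?thesis using that[of "\<mu>2 / 2"] side_A0[of \<mu>2 f2] sp inf by auto
    qed
  qed
  from F1 show ?thesis
  proof (cases rule: Fclass_cases)
    case (fin l1)
    have l1: "0 < l1" "\<mu>1 < l1" using D' fin by auto
    have sg: "sigma 3 \<mu>1 L1 \<mu>2 L2 = 1 / l1 * B / (B - 1 / l1)" using sgdef by (simp add: fin)
    have B0: "B \<le> 0" using D' by (simp add: B_def)
    note r = r3side[OF l1(1) l1(2) D'(2) B0]
    show ?thesis
    proof (rule goodI)
      show "side_ok \<mu>1 (sigma 3 \<mu>1 L1 \<mu>2 L2) (\<mu>1 / (2 * (1 - \<mu>1 * B))) f1"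
        unfolding sg using side_A3[OF F1[unfolded fin] r(2)] unfolding r(3) .
      show "side_ok \<mu>2 (sigma_plus 3 \<mu>1 L1 \<mu>2 L2) \<psi>2 f2" by (rule s2)
      show "0 \<le> sigma 3 \<mu>1 L1 \<mu>2 L2" unfolding sg by (rule r(1))
      show "0 \<le> sigma_plus 3 \<mu>1 L1 \<mu>2 L2" by (rule s2p)
      show "0 \<le> \<mu>1 / (2 * (1 - \<mu>1 * B)) + \<psi>2"
      proof (cases L2)
        case (real l2)
        note h = s2f[OF real]
        have Bv: "B = 1 / \<mu>1 + 1 / \<mu>2 + 1 / l2" by (simp add: B_def real Bq_fin)
        have l2ne: "l2 \<noteq> 0" using D'(2,3) real by auto
        have "1 - \<mu>1 * B = - \<mu>1 * (l2 + \<mu>2) / (\<mu>2 * l2)" unfolding Bv using D' l2ne by (simp add: field_simps)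
        hence "\<mu>1 / (2 * (1 - \<mu>1 * B)) = \<mu>1 / (2 * (- \<mu>1 * (l2 + \<mu>2) / (\<mu>2 * l2)))" by simp
        also have "\<dots> = - \<mu>2 * l2 / (2 * (l2 + \<mu>2))"
        proof -
          have "\<mu>1 \<noteq> 0" "l2 + \<mu>2 \<noteq> 0" "\<mu>2 * l2 \<noteq> 0" using D' l2ne h by auto
          moreover have "a / (2 * (- a * s / p)) = - p / (2 * s)" if "a \<noteq> 0" "s \<noteq> 0" "p \<noteq> 0" for a s p :: real
            using that by (simp add: field_simps)
          ultimately show ?thesis by simp
        qed
        finally have "\<mu>1 / (2 * (1 - \<mu>1 * B)) = - \<mu>2 * l2 / (2 * (l2 + \<mu>2))" .
        thus ?thesis using h by simp
      next
        case PInf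
        have Bv: "B = 1 / \<mu>1 + 1 / \<mu>2" by (simp add: B_def PInf Bq_inf)
        have "1 - \<mu>1 * B = - \<mu>1 / \<mu>2" unfolding Bv using D' by (simp add: field_simps)
        hence "\<mu>1 / (2 * (1 - \<mu>1 * B)) = \<mu>1 / (2 * (- \<mu>1 / \<mu>2))" by simp
        also have "\<dots> = - \<mu>2 / 2" using D' by (simp add: field_simps)
        finally have "\<mu>1 / (2 * (1 - \<mu>1 * B)) = - \<mu>2 / 2" .
        thus ?thesis using s2v[OF PInf] by simp
      next
        case MInf thus ?thesis using D' by simp
      qed
    qed
  next
    case inf
    have sg: "sigma 3 \<mu>1 L1 \<mu>2 L2 = 0" by (simp add: sigma_def Let_def inf einv_def)
    obtain l2 where L2: "L2 = ereal l2" using Fclass_finE[OF F2] Lfin inf by auto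
    note h = s2f[OF L2]
    show ?thesis
    proof (rule goodI)
      show "side_ok \<mu>1 (sigma 3 \<mu>1 L1 \<mu>2 L2) (\<mu>1 / 2) f1" unfolding sg by (rule side_A0)
      show "side_ok \<mu>2 (sigma_plus 3 \<mu>1 L1 \<mu>2 L2) \<psi>2 f2" by (rule s2)
      show "0 \<le> sigma 3 \<mu>1 L1 \<mu>2 L2" unfolding sg by simp
      show "0 \<le> sigma_plus 3 \<mu>1 L1 \<mu>2 L2" by (rule s2p)
      have "0 \<le> (\<mu>1 * (l2 + \<mu>2) + \<mu>2 * l2) / (2 * (l2 + \<mu>2))" using h by (simp add: algebra_simps)
      also have "\<dots> = \<mu>1 / 2 + \<psi>2" using h by (simp add: field_simps)
      finally show "0 \<le> \<mu>1 / 2 + \<psi>2" .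
    qed
  qed
qed



lemma r1_fin:
  fixes m1 l1 l2 :: real
  assumes h: "0 < m1" "m1 \<le> l2" "l2 \<le> l1" "m1 < l1"
  defines "sp \<equiv> 1 / l2 * (1 + (1 / l2 - 1 / l1) / (1 / m1 - 1 / l1))"
  shows "sp = (l2 * (l1 - m1) + m1 * (l1 - l2)) / (l2\<^sup>2 * (l1 - m1))"
    and "1 \<le> l2 * sp" and "0 \<le> sp"
    and "l2 * (1 - l2 * sp) / 2 = - (m1 * (l1 - l2) / (2 * (l1 - m1)))"
proof -
  have l2: "0 < l2" using h by simp
  have l1: "0 < l1" using h by simp
  have d: "0 < l1 - m1" using h by simp
  have q: "(1 / l2 - 1 / l1) / (1 / m1 - 1 / l1) = m1 * (l1 - l2) / (l2 * (l1 - m1))"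
  proof -
    have "1 / l2 - 1 / l1 = (l1 - l2) / (l1 * l2)" using l1 l2 by (simp add: field_simps)
    moreover have "1 / m1 - 1 / l1 = (l1 - m1) / (l1 * m1)" using l1 h by (simp add: field_simps)
    moreover have "(l1 - l2) / (l1 * l2) / ((l1 - m1) / (l1 * m1)) = m1 * (l1 - l2) / (l2 * (l1 - m1))"
      using l1 l2 d h by (simp add: field_simps)
    ultimately show ?thesis by simp
  qed
  have r0: "0 \<le> m1 * (l1 - l2) / (l2 * (l1 - m1))" using h l2 d by simp
  have sp: "sp = 1 / l2 * (1 + m1 * (l1 - l2) / (l2 * (l1 - m1)))" unfolding sp_def q ..
  show "sp = (l2 * (l1 - m1) + m1 * (l1 - l2)) / (l2\<^sup>2 * (l1 - m1))"
    unfolding sp using l2 d by (simp add: field_simps power2_eq_square)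
  have lsp: "l2 * sp = 1 + m1 * (l1 - l2) / (l2 * (l1 - m1))" unfolding sp using l2 by simp
  show "1 \<le> l2 * sp" unfolding lsp using r0 by simp
  show "0 \<le> sp" unfolding sp using r0 l2 by simp
  show "l2 * (1 - l2 * sp) / 2 = - (m1 * (l1 - l2) / (2 * (l1 - m1)))"
    unfolding lsp using l2 d by (simp add: field_simps)
qed

lemma r1_E:
  fixes m1 m2 l1 l2 :: real
  assumes h: "0 < m1" "m1 \<le> l2" "l2 \<le> l1" "m1 < l1" "m2 < 0"
    and E: "(l2 + m2) / (l1 * l2) * ((l2 - l1) / (- m2)) + 1 / m1 - 1 / l1 \<le> 0"
    and sp: "sp = (l2 * (l1 - m1) + m1 * (l1 - l2)) / (l2\<^sup>2 * (l1 - m1))"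
  shows "1 \<le> (l2 + m2) * sp"
proof -
  have l2: "0 < l2" using h by simp
  have l1: "0 < l1" using h by simp
  have d: "0 < l1 - m1" using h by simp
  have K0: "0 < m1 * l1 * l2" using h l1 l2 by simp
  have K: "0 < m1 * l1 * l2 * (- m2)" using K0 h by (intro mult_pos_pos) auto
  have "((l2 + m2) / (l1 * l2) * ((l2 - l1) / (- m2)) + 1 / m1 - 1 / l1) * (m1 * l1 * l2 * (- m2))
      = m1 * (l2 + m2) * (l2 - l1) - m2 * l2 * (l1 - m1)"
    using h l1 l2 by (simp add: field_simps)
  moreover have "((l2 + m2) / (l1 * l2) * ((l2 - l1) / (- m2)) + 1 / m1 - 1 / l1) * (m1 * l1 * l2 * (- m2)) \<le> 0"
    by (rule mult_nonpos_nonneg[OF E less_imp_le[OF K]])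
  ultimately have "m1 * (l2 + m2) * (l2 - l1) - m2 * l2 * (l1 - m1) \<le> 0" by simp
  hence t: "l2\<^sup>2 * (l1 - m1) \<le> (l2 + m2) * (l2 * (l1 - m1) + m1 * (l1 - l2))"
    by (simp add: algebra_simps power2_eq_square)
  have pos: "0 < l2\<^sup>2 * (l1 - m1)" using l2 d by simp
  have "(l2 + m2) * sp = ((l2 + m2) * (l2 * (l1 - m1) + m1 * (l1 - l2))) / (l2\<^sup>2 * (l1 - m1))"
    unfolding sp by simp
  also have "\<dots> \<ge> 1" using t pos by simp
  finally show ?thesis .
qed

lemma r1_Einf:
  fixes m1 m2 l2 :: real
  assumes h: "0 < m1" "m1 \<le> l2" "m2 < 0"
    and E: "(l2 + m2) / (m2 * l2) + 1 / m1 \<le> 0"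
  shows "1 \<le> (l2 + m2) * (1 / l2 * (1 + 1 / l2 / (1 / m1)))"
proof -
  have l2: "0 < l2" using h by simp
  have K: "m1 * m2 * l2 < 0" using h l2 by (simp add: mult_pos_neg mult_neg_pos)
  have "((l2 + m2) / (m2 * l2) + 1 / m1) * (m1 * m2 * l2) = m1 * (l2 + m2) + m2 * l2"
    using h l2 by (simp add: field_simps)
  moreover have "0 \<le> ((l2 + m2) / (m2 * l2) + 1 / m1) * (m1 * m2 * l2)"
    using E K by (simp add: mult_nonpos_nonpos less_imp_le)
  ultimately have t: "0 \<le> m1 * (l2 + m2) + m2 * l2" by simp
  have "(l2 + m2) * (1 / l2 * (1 + 1 / l2 / (1 / m1))) = (l2 + m2) * (l2 + m1) / l2\<^sup>2"
    using l2 h by (simp add: field_simps power2_eq_square)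
  also have "\<dots> \<ge> 1" using t l2 by (simp add: field_simps power2_eq_square algebra_simps)
  finally show ?thesis .
qed

lemma r1_side1:
  fixes m1 l1 l2 :: real
  assumes h: "0 < m1" "m1 \<le> l2" "l2 \<le> l1" "m1 < l1"
  defines "s \<equiv> 1 / l2 * (l2 - m1) * (1 / (l1 - m1))"
  shows "0 \<le> s" and "s * (l1 - m1) < 1"
    and "m1 * (1 - l1 * s) / (2 * (1 - s * (l1 - m1))) = m1 * (l1 - l2) / (2 * (l1 - m1))"
proof -
  have l2: "0 < l2" using h by simp
  have d: "0 < l1 - m1" using h by simp
  show "0 \<le> s" unfolding s_def using h l2 d by simp
  have e1: "1 - s * (l1 - m1) = m1 / l2" unfolding s_def using l2 d by (simp add: field_simps)
  show "s * (l1 - m1) < 1" using e1 h l2 by (smt (verit) divide_pos_pos)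
  have e2: "1 - l1 * s = m1 * (l1 - l2) / (l2 * (l1 - m1))" unfolding s_def using l2 d by (simp add: field_simps)
  show "m1 * (1 - l1 * s) / (2 * (1 - s * (l1 - m1))) = m1 * (l1 - l2) / (2 * (l1 - m1))"
    unfolding e1 e2 using l2 d h by (simp add: field_simps)
qed


lemma reg1:
  fixes f1 f2 :: "'a::euclidean_space \<Rightarrow> real"
  assumes F1: "Fclass \<mu>1 L1 f1" and F2: "Fclass \<mu>2 L2 f2" and D: "regime_dom 1 \<mu>1 L1 \<mu>2 L2"
    and mc: "\<mu>1 + \<mu>2 > 0 \<or> (\<mu>1 = 0 \<and> \<mu>2 = 0)" and Lfin: "L1 \<noteq> \<infinity> \<or> L2 \<noteq> \<infinity>"
  shows "good 1 \<mu>1 L1 \<mu>2 L2 f1 f2"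
proof -
  have D': "L2 \<le> L1" "ereal \<mu>1 \<le> L2" "0 \<le> \<mu>1" "ereal \<mu>2 < L1"
     "0 \<le> \<mu>2 \<or> (\<mu>2 < 0 \<and> 0 < \<mu>1 \<and> Eq \<mu>1 L1 \<mu>2 L2 \<le> 0)"
    using D by (auto simp: regime_dom_def Let_def)
  have "L2 \<noteq> \<infinity>" using D'(1) Lfin by auto
  then obtain l2 where L2: "L2 = ereal l2" and l2m: "\<mu>2 < l2" using Fclass_finE[OF F2] by blast
  have l2m1: "\<mu>1 \<le> l2" using D'(2) L2 by simp
  have l2p: "0 < l2" using mc l2m l2m1 by auto
  note F2' = F2[unfolded L2]
  show ?thesis
  proof (cases "\<mu>1 = 0")
    case True
    have m2: "0 \<le> \<mu>2" using mc True by auto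
    have sp: "sigma_plus 1 \<mu>1 L1 \<mu>2 L2 = 1 / l2" by (simp add: sigma_plus_def Let_def True L2)
    have a1: "1 \<le> l2 * (1 / l2)" using l2p by simp
    have a2: "1 \<le> (l2 + \<mu>2) * (1 / l2)" using l2p m2 by (simp add: field_simps)
    have s2: "side_ok \<mu>2 (sigma_plus 1 \<mu>1 L1 \<mu>2 L2) (l2 * (1 - l2 * (1 / l2)) / 2) f2"
      unfolding sp by (rule side_A1[OF F2' a1 a2])
    have z2: "l2 * (1 - l2 * (1 / l2)) / 2 = 0" using l2p by simp
    from F1 show ?thesis
    proof (cases rule: Fclass_cases)
      case (fin l1)
      have l1: "0 < l1" using fin True by simp
      have sg: "sigma 1 \<mu>1 L1 \<mu>2 L2 = 1 / l1" using l2p by (simp add: sigma_def Let_def True L2 fin)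
      have b1: "1 \<le> l1 * (1 / l1)" "1 \<le> (l1 + \<mu>1) * (1 / l1)" using l1 True by simp_all
      have s1: "side_ok \<mu>1 (sigma 1 \<mu>1 L1 \<mu>2 L2) (l1 * (1 - l1 * (1 / l1)) / 2) f1"
        unfolding sg by (rule side_A1[OF F1[unfolded fin] b1])
      show ?thesis
        by (rule goodI[OF s1 s2]) (use l1 l2p sg sp z2 in simp_all)
    next
      case inf
      have sg: "sigma 1 \<mu>1 L1 \<mu>2 L2 = 0" by (simp add: sigma_def Let_def True L2 inf einv_def)
      have s1: "side_ok \<mu>1 (sigma 1 \<mu>1 L1 \<mu>2 L2) (\<mu>1 / 2) f1" unfolding sg by (rule side_A0)
      show ?thesis
        by (rule goodI[OF s1 s2]) (use l2p sg sp z2 True in simp_all)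
    qed
  next
    case False
    hence m1: "0 < \<mu>1" using D'(3) by simp
    from F1 show ?thesis
    proof (cases rule: Fclass_cases)
      case (fin l1)
      have hh: "0 < \<mu>1" "\<mu>1 \<le> l2" "l2 \<le> l1" "\<mu>1 < l1" using m1 l2m1 D'(1) fin L2 by auto
      define sp where "sp = 1 / l2 * (1 + (1 / l2 - 1 / l1) / (1 / \<mu>1 - 1 / l1))"
      have spv: "sigma_plus 1 \<mu>1 L1 \<mu>2 L2 = sp" by (simp add: sigma_plus_def Let_def False L2 fin sp_def)
      note r = r1_fin[OF hh, folded sp_def]
      have a2: "1 \<le> (l2 + \<mu>2) * sp"
      proof (cases "0 \<le> \<mu>2")
        case True
        have "l2 * sp \<le> (l2 + \<mu>2) * sp" using True r(3) by (simp add: mult_right_mono)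
        thus ?thesis using r(2) by linarith
      next
        case False
        hence E: "Eq \<mu>1 L1 \<mu>2 L2 \<le> 0" "\<mu>2 < 0" using D'(5) by auto
        have E': "(l2 + \<mu>2) / (l1 * l2) * ((l2 - l1) / (- \<mu>2)) + 1 / \<mu>1 - 1 / l1 \<le> 0"
          using E(1) by (simp add: Eq_def Let_def fin L2)
        show ?thesis by (rule r1_E[OF hh E(2) E' r(1)])
      qed
      have s2: "side_ok \<mu>2 (sigma_plus 1 \<mu>1 L1 \<mu>2 L2) (l2 * (1 - l2 * sp) / 2) f2"
        unfolding spv by (rule side_A1[OF F2' r(2) a2])
      define s where "s = 1 / l2 * (l2 - \<mu>1) * (1 / (l1 - \<mu>1))"
      have sv: "sigma 1 \<mu>1 L1 \<mu>2 L2 = s" by (simp add: sigma_def Let_def L2 fin s_def)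
      note q = r1_side1[OF hh, folded s_def]
      have s1: "side_ok \<mu>1 (sigma 1 \<mu>1 L1 \<mu>2 L2) (\<mu>1 * (l1 - l2) / (2 * (l1 - \<mu>1))) f1"
        unfolding sv using side_A3[OF F1[unfolded fin] q(2)] unfolding q(3) .
      show ?thesis
      proof (rule goodI[OF s1 s2])
        show "0 \<le> \<mu>1 * (l1 - l2) / (2 * (l1 - \<mu>1)) + l2 * (1 - l2 * sp) / 2" using r(4) by linarith
      qed (use r(3) q(1) sv spv in simp_all)
    next
      case inf
      define sp where "sp = 1 / l2 * (1 + 1 / l2 / (1 / \<mu>1))"
      have spv: "sigma_plus 1 \<mu>1 L1 \<mu>2 L2 = sp" by (simp add: sigma_plus_def Let_def False L2 inf sp_def)
      have lsp: "l2 * sp = 1 + \<mu>1 / l2" unfolding sp_def using l2p m1 by (simp add: field_simps)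
      have sp0: "0 \<le> sp" unfolding sp_def using l2p m1 by simp
      have a1: "1 \<le> l2 * sp" unfolding lsp using l2p m1 by simp
      have a2: "1 \<le> (l2 + \<mu>2) * sp"
      proof (cases "0 \<le> \<mu>2")
        case True
        have "l2 * sp \<le> (l2 + \<mu>2) * sp" using True sp0 by (simp add: mult_right_mono)
        thus ?thesis using a1 by linarith
      next
        case False
        hence E: "Eq \<mu>1 L1 \<mu>2 L2 \<le> 0" "\<mu>2 < 0" using D'(5) by auto
        have E': "(l2 + \<mu>2) / (\<mu>2 * l2) + 1 / \<mu>1 \<le> 0"
          using E(1) by (simp add: Eq_def Let_def inf L2)
        show ?thesis unfolding sp_def by (rule r1_Einf[OF m1 l2m1 E(2) E'])
      qed
      have s2: "side_ok \<mu>2 (sigma_plus 1 \<mu>1 L1 \<mu>2 L2) (l2 * (1 - l2 * sp) / 2) f2"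
        unfolding spv by (rule side_A1[OF F2' a1 a2])
      have sg: "sigma 1 \<mu>1 L1 \<mu>2 L2 = 0" by (simp add: sigma_def Let_def L2 inf einv_def)
      have s1: "side_ok \<mu>1 (sigma 1 \<mu>1 L1 \<mu>2 L2) (\<mu>1 / 2) f1" unfolding sg by (rule side_A0)
      have z: "\<mu>1 / 2 + l2 * (1 - l2 * sp) / 2 = 0" unfolding lsp using l2p by (simp add: field_simps)
      show ?thesis
        by (rule goodI[OF s1 s2]) (use z sg spv sp0 in simp_all)
    qed
  qed
qed


lemma reg2:
  fixes f1 f2 :: "'a::euclidean_space \<Rightarrow> real"
  assumes F1: "Fclass \<mu>1 L1 f1" and F2: "Fclass \<mu>2 L2 f2" and D: "regime_dom 2 \<mu>1 L1 \<mu>2 L2"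
    and Lfin: "L1 \<noteq> \<infinity> \<or> L2 \<noteq> \<infinity>"
  shows "good 2 \<mu>1 L1 \<mu>2 L2 f1 f2"
proof -
  have D': "L1 \<le> L2" "ereal \<mu>2 \<le> L1" "0 \<le> \<mu>2" "ereal \<mu>1 < L2" "0 \<le> \<mu>1"
    using D by (auto simp: regime_dom_def Let_def)
  have "L1 \<noteq> \<infinity>" using D'(1) Lfin by auto
  then obtain l1 where L1: "L1 = ereal l1" and l1m: "\<mu>1 < l1" using Fclass_finE[OF F1] by blast
  have l1m2: "\<mu>2 \<le> l1" using D'(2) L1 by simp
  have l1p: "0 < l1" using l1m D'(5) by simp
  note F1' = F1[unfolded L1]
  show ?thesis
  proof (cases "\<mu>2 = 0")
    case True
    have sg: "sigma 2 \<mu>1 L1 \<mu>2 L2 = 1 / l1" by (simp add: sigma_def Let_def True L1)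
    have b1: "1 \<le> l1 * (1 / l1)" "1 \<le> (l1 + \<mu>1) * (1 / l1)" using l1p D'(5) by (simp_all add: field_simps)
    have s1: "side_ok \<mu>1 (sigma 2 \<mu>1 L1 \<mu>2 L2) (l1 * (1 - l1 * (1 / l1)) / 2) f1"
      unfolding sg by (rule side_A1[OF F1' b1])
    have z1: "l1 * (1 - l1 * (1 / l1)) / 2 = 0" using l1p by simp
    from F2 show ?thesis
    proof (cases rule: Fclass_cases)
      case (fin l2)
      have l2: "0 < l2" using fin True by simp
      have sp: "sigma_plus 2 \<mu>1 L1 \<mu>2 L2 = 1 / l2" using l1p by (simp add: sigma_plus_def Let_def True L1 fin)
      have b2: "1 \<le> l2 * (1 / l2)" "1 \<le> (l2 + \<mu>2) * (1 / l2)" using l2 True by simp_all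
      have s2: "side_ok \<mu>2 (sigma_plus 2 \<mu>1 L1 \<mu>2 L2) (l2 * (1 - l2 * (1 / l2)) / 2) f2"
        unfolding sp by (rule side_A1[OF F2[unfolded fin] b2])
      show ?thesis
        by (rule goodI[OF s1 s2]) (use l1p l2 sg sp z1 in simp_all)
    next
      case inf
      have sp: "sigma_plus 2 \<mu>1 L1 \<mu>2 L2 = 0" by (simp add: sigma_plus_def Let_def L1 inf einv_def)
      have s2: "side_ok \<mu>2 (sigma_plus 2 \<mu>1 L1 \<mu>2 L2) (\<mu>2 / 2) f2" unfolding sp by (rule side_A0)
      show ?thesis
        by (rule goodI[OF s1 s2]) (use l1p sg sp z1 True in simp_all)
    qed
  next
    case False
    hence m2: "0 < \<mu>2" using D'(3) by simp
    from F2 show ?thesis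
    proof (cases rule: Fclass_cases)
      case (fin l2)
      have hh: "0 < \<mu>2" "\<mu>2 \<le> l1" "l1 \<le> l2" "\<mu>2 < l2" using m2 l1m2 D'(1) fin L1 by auto
      define sg where "sg = 1 / l1 * (1 + (1 / l1 - 1 / l2) / (1 / \<mu>2 - 1 / l2))"
      have sgv: "sigma 2 \<mu>1 L1 \<mu>2 L2 = sg" by (simp add: sigma_def Let_def False L1 fin sg_def)
      note r = r1_fin[OF hh, folded sg_def]
      have a2: "1 \<le> (l1 + \<mu>1) * sg"
      proof -
        have "l1 * sg \<le> (l1 + \<mu>1) * sg" using D'(5) r(3) by (simp add: mult_right_mono)
        thus ?thesis using r(2) by linarith
      qed
      have s1: "side_ok \<mu>1 (sigma 2 \<mu>1 L1 \<mu>2 L2) (l1 * (1 - l1 * sg) / 2) f1"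
        unfolding sgv by (rule side_A1[OF F1' r(2) a2])
      define s where "s = 1 / l1 * (l1 - \<mu>2) * (1 / (l2 - \<mu>2))"
      have sv: "sigma_plus 2 \<mu>1 L1 \<mu>2 L2 = s" by (simp add: sigma_plus_def Let_def L1 fin s_def)
      note q = r1_side1[OF hh, folded s_def]
      have s2: "side_ok \<mu>2 (sigma_plus 2 \<mu>1 L1 \<mu>2 L2) (\<mu>2 * (l2 - l1) / (2 * (l2 - \<mu>2))) f2"
        unfolding sv using side_A3[OF F2[unfolded fin] q(2)] unfolding q(3) .
      show ?thesis
      proof (rule goodI[OF s1 s2])
        show "0 \<le> l1 * (1 - l1 * sg) / 2 + \<mu>2 * (l2 - l1) / (2 * (l2 - \<mu>2))" using r(4) by linarith
      qed (use r(3) q(1) sv sgv in simp_all)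
    next
      case inf
      define sg where "sg = 1 / l1 * (1 + 1 / l1 / (1 / \<mu>2))"
      have sgv: "sigma 2 \<mu>1 L1 \<mu>2 L2 = sg" by (simp add: sigma_def Let_def False L1 inf sg_def)
      have lsg: "l1 * sg = 1 + \<mu>2 / l1" unfolding sg_def using l1p m2 by (simp add: field_simps)
      have sg0: "0 \<le> sg" unfolding sg_def using l1p m2 by simp
      have a1: "1 \<le> l1 * sg" unfolding lsg using l1p m2 by simp
      have a2: "1 \<le> (l1 + \<mu>1) * sg"
      proof -
        have "l1 * sg \<le> (l1 + \<mu>1) * sg" using D'(5) sg0 by (simp add: mult_right_mono)
        thus ?thesis using a1 by linarith
      qed
      have s1: "side_ok \<mu>1 (sigma 2 \<mu>1 L1 \<mu>2 L2) (l1 * (1 - l1 * sg) / 2) f1"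
        unfolding sgv by (rule side_A1[OF F1' a1 a2])
      have sp: "sigma_plus 2 \<mu>1 L1 \<mu>2 L2 = 0" by (simp add: sigma_plus_def Let_def L1 inf einv_def)
      have s2: "side_ok \<mu>2 (sigma_plus 2 \<mu>1 L1 \<mu>2 L2) (\<mu>2 / 2) f2" unfolding sp by (rule side_A0)
      have z: "l1 * (1 - l1 * sg) / 2 + \<mu>2 / 2 = 0" unfolding lsg using l1p by (simp add: field_simps)
      show ?thesis
        by (rule goodI[OF s1 s2]) (use z sgv sp sg0 in simp_all)
    qed
  qed
qed



lemma argmin_subgrad:
  fixes f :: "'a::euclidean_space \<Rightarrow> real"
  assumes F: "Fclass \<mu> L f" and mn: "\<And>w. f x' - inner g x' \<le> f w - inner g w"
  shows "g \<in> subdiff \<mu> f x'"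
proof -
  have cv: "convex_on UNIV (\<lambda>x. f x - \<mu> / 2 * (norm x)\<^sup>2)" using F unfolding Fclass_def by auto
  define h where "h = g - \<mu> *\<^sub>R x'"
  have "\<forall>y. f y - \<mu> / 2 * (norm y)\<^sup>2 \<ge> f x' - \<mu> / 2 * (norm x')\<^sup>2 + inner h (y - x')"
  proof
    fix y
    define d where "d = y - x'"
    show "f y - \<mu> / 2 * (norm y)\<^sup>2 \<ge> f x' - \<mu> / 2 * (norm x')\<^sup>2 + inner h (y - x')"
    proof (rule small_t)
      fix t :: real assume t: "0 < t" "t \<le> 1"
      define yt where "yt = (1 - t) *\<^sub>R x' + t *\<^sub>R y"
      have yt': "yt = x' + t *\<^sub>R d" by (simp add: yt_def d_def algebra_simps)
      have c: "f yt - \<mu> / 2 * (norm yt)\<^sup>2 \<le> (1 - t) * (f x' - \<mu> / 2 * (norm x')\<^sup>2) + t * (f y - \<mu> / 2 * (norm y)\<^sup>2)"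
        using convex_onD[OF cv, of t x' y] t unfolding yt_def by simp
      have m: "f x' - inner g x' \<le> f yt - inner g yt" by (rule mn)
      have n: "(norm yt)\<^sup>2 = (norm x')\<^sup>2 + 2 * t * inner x' d + t\<^sup>2 * (norm d)\<^sup>2"
        unfolding yt' power2_norm_eq_inner by (simp add: algebra_simps inner_commute power2_eq_square)
      have ig: "inner g yt = inner g x' + t * inner g d" by (simp add: yt' inner_add_right)
      have ih: "inner h d = inner g d - \<mu> * inner x' d" by (simp add: h_def inner_diff_left)
      have "t * (f x' - \<mu> / 2 * (norm x')\<^sup>2 + inner h d) \<le> t * (f y - \<mu> / 2 * (norm y)\<^sup>2 + t * (\<mu> / 2 * (norm d)\<^sup>2))"
      proof -
        have "t * (f x' - \<mu> / 2 * (norm x')\<^sup>2 + inner h d) = t * (f x' - \<mu> / 2 * (norm x')\<^sup>2) + t * inner g d - \<mu> * t * inner x' d"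
          unfolding ih by (simp add: algebra_simps)
        also have "\<dots> \<le> (f yt - \<mu> / 2 * (norm yt)\<^sup>2) - (1 - t) * (f x' - \<mu> / 2 * (norm x')\<^sup>2) + \<mu> / 2 * t\<^sup>2 * (norm d)\<^sup>2"
          using m unfolding ig n by (simp add: field_simps)
        also have "\<dots> \<le> t * (f y - \<mu> / 2 * (norm y)\<^sup>2) + \<mu> / 2 * t\<^sup>2 * (norm d)\<^sup>2"
          using c by linarith
        also have "\<dots> = t * (f y - \<mu> / 2 * (norm y)\<^sup>2 + t * (\<mu> / 2 * (norm d)\<^sup>2))"
          by (simp add: algebra_simps power2_eq_square)
        finally show ?thesis .
      qed
      hence "f x' - \<mu> / 2 * (norm x')\<^sup>2 + inner h d \<le> f y - \<mu> / 2 * (norm y)\<^sup>2 + t * (\<mu> / 2 * (norm d)\<^sup>2)"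
        using t by simp
      thus "f x' - \<mu> / 2 * (norm x')\<^sup>2 + inner h (y - x') \<le> f y - \<mu> / 2 * (norm y)\<^sup>2 + t * (\<mu> / 2 * (norm (y - x'))\<^sup>2)"
        by (simp add: d_def)
    qed
  qed
  moreover have "g = h + \<mu> *\<^sub>R x'" by (simp add: h_def)
  ultimately show ?thesis unfolding subdiff_def by blast
qed



lemma step:
  fixes f1 f2 :: "'a::euclidean_space \<Rightarrow> real"
  assumes G: "good i \<mu>1 L1 \<mu>2 L2 f1 f2"
    and a: "a \<in> subdiff \<mu>1 f1 x" and b1: "b \<in> subdiff \<mu>1 f1 x'"
    and b2: "b \<in> subdiff \<mu>2 f2 x" and c: "c \<in> subdiff \<mu>2 f2 x'"
  shows "(f1 x - f2 x) - (f1 x' - f2 x') \<ge> sigma i \<mu>1 L1 \<mu>2 L2 / 2 * (norm (a - b))\<^sup>2 + sigma_plus i \<mu>1 L1 \<mu>2 L2 / 2 * (norm (b - c))\<^sup>2"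
proof -
  obtain \<psi>1 \<psi>2 where s1: "side_ok \<mu>1 (sigma i \<mu>1 L1 \<mu>2 L2) \<psi>1 f1" and s2: "side_ok \<mu>2 (sigma_plus i \<mu>1 L1 \<mu>2 L2) \<psi>2 f2"
    and ps: "0 \<le> \<psi>1 + \<psi>2" using G unfolding good_def by blast
  have h1: "f1 x - f1 x' - inner b (x - x') \<ge> sigma i \<mu>1 L1 \<mu>2 L2 / 2 * (norm (a - b))\<^sup>2 + \<psi>1 * (norm (x - x'))\<^sup>2"
    using s1 a b1 unfolding side_ok_def by blast
  have h2: "f2 x' - f2 x - inner b (x' - x) \<ge> sigma_plus i \<mu>1 L1 \<mu>2 L2 / 2 * (norm (c - b))\<^sup>2 + \<psi>2 * (norm (x' - x))\<^sup>2"
    using s2 c b2 unfolding side_ok_def by blast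
  have e1: "norm (c - b) = norm (b - c)" "norm (x' - x) = norm (x - x')" by (simp_all add: norm_minus_commute)
  have e2: "inner b (x' - x) = - inner b (x - x')" by (simp add: inner_diff_right)
  have "0 \<le> (\<psi>1 + \<psi>2) * (norm (x - x'))\<^sup>2" using ps by simp
  thus ?thesis using h1 h2 unfolding e1 e2 by (simp add: algebra_simps)
qed

lemma good_all:
  fixes f1 f2 :: "'a::euclidean_space \<Rightarrow> real"
  assumes F1: "Fclass \<mu>1 L1 f1" and F2: "Fclass \<mu>2 L2 f2" and i: "i \<in> {1..6}" and D: "regime_dom i \<mu>1 L1 \<mu>2 L2"
    and mc: "\<mu>1 + \<mu>2 > 0 \<or> (\<mu>1 = 0 \<and> \<mu>2 = 0)" and Lfin: "L1 \<noteq> \<infinity> \<or> L2 \<noteq> \<infinity>"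
  shows "good i \<mu>1 L1 \<mu>2 L2 f1 f2"
proof -
  have "i = 1 \<or> i = 2 \<or> i = 3 \<or> i = 4 \<or> i = 5 \<or> i = 6" using i by auto
  thus ?thesis
    using reg1[OF F1 F2 _ mc Lfin] reg2[OF F1 F2 _ Lfin] reg3[OF F1 F2 _ mc Lfin]
      reg4[OF F1 F2 _ mc] reg5[OF F1 F2] reg6[OF F1 F2] D by auto
qed

lemma good_nonneg: "good i \<mu>1 L1 \<mu>2 L2 f1 f2 \<Longrightarrow> 0 \<le> sigma i \<mu>1 L1 \<mu>2 L2 \<and> 0 \<le> sigma_plus i \<mu>1 L1 \<mu>2 L2"
  unfolding good_def by blast

theorem corollary1:
  fixes f1 f2 :: "'a::euclidean_space \<Rightarrow> real"
    and \<mu>1 \<mu>2 :: real and L1 L2 :: ereal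
    and N :: nat and x g1 g2 :: "nat \<Rightarrow> 'a" and i :: nat
  assumes mu1: "0 \<le> \<mu>1"
    and F1: "Fclass \<mu>1 L1 f1" and F2: "Fclass \<mu>2 L2 f2"
    and bdd: "bdd_below (range (\<lambda>y. f1 y - f2 y))"
    and dom_ne: "dom_subdiff \<mu>1 f1 \<noteq> {}"
    and dom_sub: "dom_subdiff \<mu>1 f1 \<subseteq> dom_subdiff \<mu>2 f2"
    and rng_sub: "range_subdiff \<mu>2 f2 \<subseteq> range_subdiff \<mu>1 f1"
    and Lfin: "L1 \<noteq> \<infinity> \<or> L2 \<noteq> \<infinity>"
    and mu_cond: "\<mu>1 + \<mu>2 > 0 \<or> (\<mu>1 = 0 \<and> \<mu>2 = 0)"
    and N1: "1 \<le> N"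
    and x0: "x 0 \<in> dom_subdiff \<mu>1 f1"
    and g2_sub: "\<And>k. k < N \<Longrightarrow> g2 k \<in> subdiff \<mu>2 f2 (x k)"
    and x_argmin: "\<And>k w. k < N \<Longrightarrow> f1 (x (Suc k)) - inner (g2 k) (x (Suc k)) \<le> f1 w - inner (g2 k) w"
    and g1_def: "\<And>k. k < N \<Longrightarrow> g1 (Suc k) = g2 k"
    and g10: "g1 0 \<in> subdiff \<mu>1 f1 (x 0)"
    and g2N: "g2 N \<in> subdiff \<mu>2 f2 (x N)"
    and i_range: "i \<in> {1..6}"
    and D: "regime_dom i \<mu>1 L1 \<mu>2 L2"
  shows "(let F = (\<lambda>y. f1 y - f2 y);
              Flo = Inf (range F);
              p = sigma i \<mu>1 L1 \<mu>2 L2 + sigma_plus i \<mu>1 L1 \<mu>2 L2;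
              m = Min ((\<lambda>k. (norm (g1 k - g2 k))\<^sup>2) ` {0..N})
          in (0 < p * real N \<longrightarrow> m / 2 \<le> (F (x 0) - F (x N)) / (p * real N)) \<and>
             (ereal \<mu>2 < L1 \<and> 0 < p * real N + einv (L1 - ereal \<mu>2) \<longrightarrow>
                m / 2 \<le> (F (x 0) - Flo) / (p * real N + einv (L1 - ereal \<mu>2))))"
proof -
  define F where "F = (\<lambda>y. f1 y - f2 y)"
  define Flo where "Flo = Inf (range F)"
  define \<sigma> where "\<sigma> = sigma i \<mu>1 L1 \<mu>2 L2"
  define \<sigma>p where "\<sigma>p = sigma_plus i \<mu>1 L1 \<mu>2 L2"
  define p where "p = \<sigma> + \<sigma>p"
  define a where "a = (\<lambda>k. (norm (g1 k - g2 k))\<^sup>2)"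
  define m where "m = Min (a ` {0..N})"
  have G: "good i \<mu>1 L1 \<mu>2 L2 f1 f2" by (rule good_all[OF F1 F2 i_range D mu_cond Lfin])
  have s0: "0 \<le> \<sigma>" "0 \<le> \<sigma>p" using good_nonneg[OF G] by (simp_all add: \<sigma>_def \<sigma>p_def)
  have g1s: "g1 k \<in> subdiff \<mu>1 f1 (x k)" if "k \<le> N" for k
  proof (cases k)
    case 0 thus ?thesis using g10 by simp
  next
    case (Suc j)
    hence j: "j < N" using that by simp
    show ?thesis unfolding Suc g1_def[OF j]
      by (rule argmin_subgrad[OF F1]) (rule x_argmin[OF j])
  qed
  have g2s: "g2 k \<in> subdiff \<mu>2 f2 (x k)" if "k \<le> N" for k
    using that g2_sub g2N by (cases "k = N") auto
  have mle: "m \<le> a k" if "k \<le> N" for k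
    unfolding m_def using that by (intro Min_le) auto
  have stepk: "F (x k) - F (x (Suc k)) \<ge> \<sigma> / 2 * a k + \<sigma>p / 2 * a (Suc k)" if k: "k < N" for k
  proof -
    have "F (x k) - F (x (Suc k)) \<ge> \<sigma> / 2 * (norm (g1 k - g2 k))\<^sup>2 + \<sigma>p / 2 * (norm (g2 k - g2 (Suc k)))\<^sup>2"
      unfolding F_def \<sigma>_def \<sigma>p_def
      by (rule step[OF G g1s[of k] _ g2s[of k] g2s[of "Suc k"]]) (use k g1s[of "Suc k"] g1_def[OF k] in auto)
    thus ?thesis unfolding a_def g1_def[OF k] .
  qed
  have stepm: "F (x k) - F (x (Suc k)) \<ge> p / 2 * m" if k: "k < N" for k
  proof -
    have "\<sigma> / 2 * m \<le> \<sigma> / 2 * a k" using mle[of k] k s0 by (intro mult_left_mono) auto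
    moreover have "\<sigma>p / 2 * m \<le> \<sigma>p / 2 * a (Suc k)" using mle[of "Suc k"] k s0 by (intro mult_left_mono) auto
    moreover have "p / 2 * m = \<sigma> / 2 * m + \<sigma>p / 2 * m" by (simp add: p_def algebra_simps)
    ultimately show ?thesis using stepk[OF k] by linarith
  qed
  have tel: "F (x 0) - F (x N) = (\<Sum>k<N. F (x k) - F (x (Suc k)))"
    by (rule sum_lessThan_telescope'[symmetric])
  have desc: "F (x 0) - F (x N) \<ge> p * real N / 2 * m"
  proof -
    have "(\<Sum>k<N. p / 2 * m) \<le> (\<Sum>k<N. F (x k) - F (x (Suc k)))"
      by (rule sum_mono) (use stepm in auto)
    moreover have "(\<Sum>k<N. p / 2 * m) = p * real N / 2 * m" by (simp add: algebra_simps)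
    ultimately show ?thesis unfolding tel by linarith
  qed
  have A: "0 < p * real N \<longrightarrow> m / 2 \<le> (F (x 0) - F (x N)) / (p * real N)"
  proof
    assume pos: "0 < p * real N"
    have "m / 2 * (p * real N) \<le> F (x 0) - F (x N)" using desc by (simp add: algebra_simps)
    thus "m / 2 \<le> (F (x 0) - F (x N)) / (p * real N)" using pos by (simp add: pos_le_divide_eq)
  qed
  define e where "e = einv (L1 - ereal \<mu>2)"
  have bddF: "bdd_below (range F)" using bdd unfolding F_def .
  have lowN: "F (x N) - Flo \<ge> e / 2 * a N" if lt: "ereal \<mu>2 < L1"
  proof (cases L1)
    case PInf
    have "e = 0" unfolding e_def PInf by simp
    moreover have "Flo \<le> F (x N)" unfolding Flo_def using bddF by (intro cInf_lower) auto
    ultimately show ?thesis by simp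
  next
    case MInf thus ?thesis using lt by simp
  next
    case (real l1)
    have lm: "\<mu>2 < l1" using lt real by simp
    have ev: "e = 1 / (l1 - \<mu>2)" unfolding e_def real by simp
    have N0: "N - 1 < N" using N1 by simp
    have gN: "g1 N \<in> subdiff \<mu>1 f1 (x N)" using g1s by simp
    define w where "w = g1 N - g2 N"
    define y where "y = x N - e *\<^sub>R w"
    have d1: "f1 y \<le> f1 (x N) + inner (g1 N) (y - x N) + l1 / 2 * (norm (y - x N))\<^sup>2"
      by (rule descent[OF F1[unfolded real] gN])
    have d2: "f2 y \<ge> f2 (x N) + inner (g2 N) (y - x N) + \<mu>2 / 2 * (norm (y - x N))\<^sup>2"
      by (rule subgrad_lower[OF g2N])
    have yx: "y - x N = - e *\<^sub>R w" by (simp add: y_def)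
    have "F y \<le> F (x N) + inner w (y - x N) + (l1 - \<mu>2) / 2 * (norm (y - x N))\<^sup>2"
    proof -
      have "inner w (y - x N) = inner (g1 N) (y - x N) - inner (g2 N) (y - x N)" by (simp add: w_def inner_diff_left)
      moreover have "(l1 - \<mu>2) / 2 * (norm (y - x N))\<^sup>2 = l1 / 2 * (norm (y - x N))\<^sup>2 - \<mu>2 / 2 * (norm (y - x N))\<^sup>2"
        by (simp add: field_simps)
      ultimately show ?thesis using d1 d2 unfolding F_def by linarith
    qed
    also have "inner w (y - x N) = - e * (norm w)\<^sup>2" unfolding yx by (simp add: power2_norm_eq_inner)
    also have "(l1 - \<mu>2) / 2 * (norm (y - x N))\<^sup>2 = e / 2 * (norm w)\<^sup>2"
    proof -
      have ce: "(l1 - \<mu>2) * e = 1" unfolding ev using lm by simp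
      have "(norm (y - x N))\<^sup>2 = e\<^sup>2 * (norm w)\<^sup>2" unfolding yx by (simp add: power_mult_distrib)
      hence "(l1 - \<mu>2) / 2 * (norm (y - x N))\<^sup>2 = ((l1 - \<mu>2) * e) * e / 2 * (norm w)\<^sup>2"
        by (simp add: power2_eq_square algebra_simps)
      thus ?thesis unfolding ce by simp
    qed
    finally have "F y \<le> F (x N) - e / 2 * (norm w)\<^sup>2" by simp
    moreover have "Flo \<le> F y" unfolding Flo_def using bddF by (intro cInf_lower) auto
    ultimately show ?thesis unfolding a_def w_def by simp
  qed
  have e0: "0 \<le> e" if lt: "ereal \<mu>2 < L1"
  proof (cases L1)
    case (real l1) thus ?thesis using lt unfolding e_def by simp
  qed (use lt e_def in auto)
  have B: "ereal \<mu>2 < L1 \<and> 0 < p * real N + e \<longrightarrow> m / 2 \<le> (F (x 0) - Flo) / (p * real N + e)"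
  proof
    assume h: "ereal \<mu>2 < L1 \<and> 0 < p * real N + e"
    have "e / 2 * m \<le> e / 2 * a N" using mle[of N] e0 h by (intro mult_left_mono) auto
    hence "F (x 0) - Flo \<ge> p * real N / 2 * m + e / 2 * m" using desc lowN h by linarith
    hence "m / 2 * (p * real N + e) \<le> F (x 0) - Flo" by (simp add: algebra_simps)
    thus "m / 2 \<le> (F (x 0) - Flo) / (p * real N + e)" using h by (simp add: pos_le_divide_eq)
  qed
  show ?thesis
    unfolding Let_def
    using A B unfolding F_def Flo_def p_def \<sigma>_def \<sigma>p_def m_def a_def e_def by simp
qed


end
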